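(* Let $r\ge 1$ be an integer, $\mathcal{C}_0 \subseteq \mathbb{F}_2^d$ a linear code with relative distance $\delta$ and $r$'th relative generalized distance $\delta_r$, $G=(L\cup R,E)$ the double cover of a $d$-regular graph on $n$ vertices with expansion $\lambda$, $\varepsilon>0$ with $\frac{\lambda}{d} \leq \frac{\varepsilon^2\delta^2}{2^{r+4}}$, and $z \in (\mathbb{F}_2\cup\{\bot\})^E$ with at most $(1-\varepsilon)\delta\delta_r dn$ coordinates equal to $\bot$. Let $E'\subseteq E$ be the edge set produced by the procedure \textsc{FindHeavyEdges} described in the context, and let $B'$ be the set of vertices $v\in L\cup R$ such that $(v,u)\notin E'$ for more than $\delta d$ neighbours $u$ of $v$. Then: (1) $|B'\cap L|, |B'\cap R| \le \left(1-\frac{\varepsilon}{2}\right)\delta n$; (2) $|E(B')| \le \left(1-\frac{\varepsilon}{4}\right)\left(\delta-\frac{\lambda}{d}\right)\delta nd$, where $E(B')$ denotes the set of edges of $G$ with both endpoints in $B'$.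
   Context: Relative distance of a linear code: minimum relative weight of a nonzero codeword; $r$'th relative generalized distance of $\mathcal{C}_0 \subseteq \mathbb{F}_2^d$: $\frac1d\min_V|\{i:\exists v\in V, v_i\ne 0\}|$ over $r$-dimensional subspaces $V\subseteq\mathcal{C}_0$. For $w\in(\mathbb{F}_2\cup\{\bot\})^d$, $\mathrm{List}_{\mathcal{C}_0}(w)=\{c\in\mathcal{C}_0: c_i=w_i \text{ whenever } w_i\ne\bot\}$. Expansion of a $d$-regular graph: $\max\{\lambda_2,|\lambda_n|\}$ of its adjacency eigenvalues; its double cover $G=(L\cup R,E)$ has $L,R$ copies of the vertex set with $u\in L$, $v\in R$ adjacent iff they are adjacent in the original graph. Fix for each vertex $v$ an ordering $\Gamma_1(v),\dots,\Gamma_d(v)$ of its neighbours. Let $B\subseteq L\cup R$ be the set of vertices $v$ with $z_{(v,u)}=\bot$ for more than $\delta_r d$ neighbours $u$. For $v\notin B$, let $L_v=\mathrm{List}_{\mathcal{C}_0}((z_{(v,\Gamma_1(v))},\dots,z_{(v,\Gamma_d(v))}))$; it is an affine subspace of $\mathbb{F}_2^d$ of some dimension $r_v\le r-1$, and fix $G_v\in\mathbb{F}_2^{d\times r_v}$, $b_v\in\mathbb{F}_2^d$ with $L_v=\{G_vx+b_v: x\in\mathbb{F}_2^{r_v}\}$; the rows of $G_v$ are indexed by the edges incident to $v$. Local equivalence: for $v\notin B$ and edges $(u,v),(w,v)$, write $(u,v)\sim_v(w,v)$ if the rows of $G_v$ indexed by these edges are equal. \textsc{FindHeavyEdges}: start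 with $E'=E$; remove from $E'$ all edges incident to a vertex of $B$; then, as long as there exist an edge $(u,v)\in E'$ (with $v$ either endpoint) such that $|\{(w,v)\in E' : (w,v)\sim_v(u,v)\}| \le \frac{\varepsilon^2\delta^2}{2^{r+3}} d$, remove $(u,v)$ and all $(w,v)\in E'$ with $(w,v)\sim_v(u,v)$ from $E'$; output the final $E'$. *)

theory Defs
  imports "HOL-Analysis.Analysis" "HOL-Library.Z2" "HOL-Library.Multiset"
          "HOL-Computational_Algebra.Polynomial"
begin

section \<open>Codes over F_2 = bit, coordinates indexed by a finite type 'd (d = CARD('d))\<close>

definition linear_code :: "(bit ^ 'd) set \<Rightarrow> bool" where
  "linear_code C \<longleftrightarrow> vec.subspace C"

definition rel_weight :: "bit ^ 'd \<Rightarrow> real" where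
  "rel_weight c = real (card {i. c $ i \<noteq> 0}) / real CARD('d)"

definition rel_distance :: "(bit ^ 'd) set \<Rightarrow> real" where
  "rel_distance C = Min {rel_weight c | c. c \<in> C \<and> c \<noteq> 0}"

definition gen_rel_distance :: "(bit ^ 'd) set \<Rightarrow> nat \<Rightarrow> real" where
  "gen_rel_distance C r =
     Min {real (card {i. \<exists>v\<in>V. v $ i \<noteq> 0}) / real CARD('d)
          | V. V \<subseteq> C \<and> vec.subspace V \<and> vec.dim V = r}"

text \<open>None plays the role of the erasure symbol bot.\<close>
definition list_dec :: "(bit ^ 'd) set \<Rightarrow> (bit option) ^ 'd \<Rightarrow> (bit ^ 'd) set" where
  "list_dec C w = {c \<in> C. \<forall>i. w $ i \<noteq> None \<longrightarrow> c $ i = the (w $ i)}"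

section \<open>Graphs, vertices indexed by a finite type 'n (n = CARD('n))\<close>

definition regular_graph :: "('n \<Rightarrow> 'n \<Rightarrow> bool) \<Rightarrow> nat \<Rightarrow> bool" where
  "regular_graph adj d \<longleftrightarrow> (\<forall>u v. adj u v \<longrightarrow> adj v u) \<and> (\<forall>v. \<not> adj v v)
      \<and> (\<forall>v. card {u. adj v u} = d)"

definition char_poly_mat :: "real ^ 'n ^ 'n \<Rightarrow> real poly" where
  "char_poly_mat A = det (\<chi> i j. (if i = j then [:0, 1:] else 0) - [:A $ i $ j:])"

definition adj_matrix :: "('n \<Rightarrow> 'n \<Rightarrow> bool) \<Rightarrow> real ^ 'n ^ 'n" where
  "adj_matrix adj = (\<chi> i j. if adj i j then 1 else 0)"

text \<open>Eigenvalues with multiplicity, sorted increasingly: lambda_n = first, lambda_2 = (n-1)-th.\<close>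
definition adj_eigenvalues :: "('n::finite \<Rightarrow> 'n \<Rightarrow> bool) \<Rightarrow> real list" where
  "adj_eigenvalues adj = sorted_list_of_multiset (proots (char_poly_mat (adj_matrix adj)))"

definition expansion :: "('n::finite \<Rightarrow> 'n \<Rightarrow> bool) \<Rightarrow> real" where
  "expansion adj = max (adj_eigenvalues adj ! (CARD('n) - 2)) \<bar>adj_eigenvalues adj ! 0\<bar>"

section \<open>Double cover: vertices bool \<times> 'n (False = L, True = R); edges (u,v) with u\<in>L, v\<in>R\<close>

definition dc_edges :: "('n \<Rightarrow> 'n \<Rightarrow> bool) \<Rightarrow> ('n \<times> 'n) set" where
  "dc_edges adj = {(u, v). adj u v}"

text \<open>The edge between double-cover vertex v and (the copy on the other side of) u.\<close>
definition dc_edge :: "bool \<times> 'n \<Rightarrow> 'n \<Rightarrow> 'n \<times> 'n" where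
  "dc_edge v u = (if fst v then (u, snd v) else (snd v, u))"

definition incident :: "('n \<Rightarrow> 'n \<Rightarrow> bool) \<Rightarrow> bool \<times> 'n \<Rightarrow> ('n \<times> 'n) set" where
  "incident adj v = dc_edge v ` {u. adj (snd v) u}"

text \<open>Local received word at v, read along the ordering Gam v of its neighbours.\<close>
definition local_word :: "('n \<times> 'n \<Rightarrow> bit option) \<Rightarrow> (bool \<times> 'n \<Rightarrow> 'd \<Rightarrow> 'n)
     \<Rightarrow> bool \<times> 'n \<Rightarrow> (bit option) ^ 'd" where
  "local_word z Gam v = (\<chi> i. z (dc_edge v (Gam v i)))"

definition bad_set :: "('n \<Rightarrow> 'n \<Rightarrow> bool) \<Rightarrow> real \<Rightarrow> ('n \<times> 'n \<Rightarrow> bit option)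
     \<Rightarrow> (bool \<times> 'n) set" where
  "bad_set adj t z = {v. real (card {u. adj (snd v) u \<and> z (dc_edge v u) = None}) > t}"

text \<open>G_v given by its list of columns gs (so row i of G_v is map (\<lambda>g. g $ i) gs).\<close>
definition is_param :: "(bit ^ 'd) set \<Rightarrow> bit ^ 'd \<Rightarrow> (bit ^ 'd) list \<Rightarrow> bool" where
  "is_param S b gs \<longleftrightarrow> distinct gs \<and> vec.independent (set gs) \<and>
     S = {b + sum_list (map2 (\<lambda>a g. a *s g) xs gs) | xs. length xs = length gs}"

definition local_equiv :: "(bool \<times> 'n \<Rightarrow> (bit ^ 'd) list) \<Rightarrow> (bool \<times> 'n \<Rightarrow> 'd \<Rightarrow> 'n)
     \<Rightarrow> bool \<times> 'n \<Rightarrow> 'n \<times> 'n \<Rightarrow> 'n \<times> 'n \<Rightarrow> bool" where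
  "local_equiv gs Gam v e e' \<longleftrightarrow> (\<exists>i j. e = dc_edge v (Gam v i) \<and> e' = dc_edge v (Gam v j) \<and>
       map (\<lambda>g. g $ i) (gs v) = map (\<lambda>g. g $ j) (gs v))"

definition fhe_step :: "('n \<Rightarrow> 'n \<Rightarrow> bool) \<Rightarrow> real \<Rightarrow> (bool \<times> 'n \<Rightarrow> (bit ^ 'd) list)
     \<Rightarrow> (bool \<times> 'n \<Rightarrow> 'd \<Rightarrow> 'n) \<Rightarrow> ('n \<times> 'n) set \<Rightarrow> ('n \<times> 'n) set \<Rightarrow> bool" where
  "fhe_step adj thr gs Gam E1 E2 \<longleftrightarrow> (\<exists>v e. e \<in> E1 \<and> e \<in> incident adj v \<and>
      real (card {e' \<in> E1. local_equiv gs Gam v e e'}) \<le> thr \<and>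
      E2 = E1 - {e' \<in> E1. local_equiv gs Gam v e e'})"

text \<open>E' is a possible output of FindHeavyEdges (any order of removals).\<close>
definition find_heavy_edges_output :: "('n \<Rightarrow> 'n \<Rightarrow> bool) \<Rightarrow> real \<Rightarrow> (bool \<times> 'n) set
     \<Rightarrow> (bool \<times> 'n \<Rightarrow> (bit ^ 'd) list) \<Rightarrow> (bool \<times> 'n \<Rightarrow> 'd \<Rightarrow> 'n) \<Rightarrow> ('n \<times> 'n) set \<Rightarrow> bool" where
  "find_heavy_edges_output adj thr B gs Gam E' \<longleftrightarrow>
     (fhe_step adj thr gs Gam)\<^sup>*\<^sup>* (dc_edges adj - (\<Union>v\<in>B. incident adj v)) E' \<and>
     \<not> (\<exists>E2. fhe_step adj thr gs Gam E' E2)"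

end

theory Submission
  imports Defs "Jordan_Normal_Form.Schur_Decomposition"
begin


no_notation Matrix.vec_index (infixl \<open>$\<close> 100)
no_notation Matrix.scalar_prod (infix \<open>\<bullet>\<close> 70)


lemma sign_conj_bridge:
  fixes f :: "nat \<Rightarrow> 'n::finite"
  assumes f: "bij_betw f {0..<CARD('n)} (UNIV::'n set)"
    and p: "p permutes {0..<CARD('n)}"
  shows "sign (f \<circ> p \<circ> inv_into {0..<CARD('n)} f) = sign p"
  using p finite_atLeastLessThan
proof (induction rule: permutes_induct)
  case id
  have "f \<circ> id \<circ> inv_into {0..<CARD('n)} f = id"
    using f by (auto simp: bij_betw_def f_inv_into_f)
  then show ?case by simp
next
  case (swap a b p)
  let ?g = "inv_into {0..<CARD('n)} f"
  have inj: "inj_on f {0..<CARD('n)}" using f by (auto simp: bij_betw_def)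
  have pin: "p (?g y) \<in> {0..<CARD('n)}" for y
    using swap(4) f by (metis bij_betw_def inv_into_into permutes_in_image UNIV_I)
  have eq: "f \<circ> (Transposition.transpose a b \<circ> p) \<circ> ?g
      = Transposition.transpose (f a) (f b) \<circ> (f \<circ> p \<circ> ?g)"
  proof
    fix y
    have "f (Transposition.transpose a b (p (?g y))) = Transposition.transpose (f a) (f b) (f (p (?g y)))"
      using inj swap(1,2) pin[of y] by (auto simp: Transposition.transpose_def inj_on_eq_iff)
    then show "(f \<circ> (Transposition.transpose a b \<circ> p) \<circ> ?g) y
      = (Transposition.transpose (f a) (f b) \<circ> (f \<circ> p \<circ> ?g)) y" by simp
  qed
  have fab: "f a \<noteq> f b" using inj swap(1,2,3) by (auto simp: inj_on_eq_iff)
  have "bij_betw (f \<circ> (p \<circ> ?g)) UNIV UNIV"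
    by (rule bij_betw_trans[OF bij_betw_trans[OF bij_betw_inv_into[OF f] permutes_imp_bij[OF swap(4)]] f])
  then have "(f \<circ> p \<circ> ?g) permutes UNIV"
    by (intro bij_imp_permutes) (auto simp: o_assoc)
  then have perm1: "permutation (f \<circ> p \<circ> ?g)"
    by (intro permutes_imp_permutation[where S=UNIV]) auto
  have perm2: "permutation p" using swap(4) permutes_imp_permutation by blast
  have s1: "sign (Transposition.transpose (f a) (f b) \<circ> (f \<circ> p \<circ> ?g))
      = sign (Transposition.transpose (f a) (f b)) * sign (f \<circ> p \<circ> ?g)"
    by (rule sign_compose[OF permutation_swap_id perm1])
  have s2: "sign (Transposition.transpose a b \<circ> p) = sign (Transposition.transpose a b) * sign p"
    by (rule sign_compose[OF permutation_swap_id perm2])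
  show ?case
    unfolding eq s1 s2 using fab swap(3) swap.IH by (simp add: sign_swap_id comp_def)
qed

lemma det_bridge:
  fixes M :: "'a::comm_ring_1^'n::finite^'n" and f :: "nat \<Rightarrow> 'n"
  assumes f: "bij_betw f {0..<CARD('n)} (UNIV::'n set)"
  shows "Determinants.det M = Determinant.det (mat CARD('n) CARD('n) (\<lambda>(i,j). M $ f i $ f j))"
proof -
  let ?n = "CARD('n)"
  let ?g = "inv_into {0..<?n} f"
  define h where "h p = f \<circ> p \<circ> ?g" for p :: "nat \<Rightarrow> nat"
  define h' where "h' q = (\<lambda>i. if i < ?n then ?g (q (f i)) else i)" for q :: "'n \<Rightarrow> 'n"
  have inj: "inj_on f {0..<?n}" using f by (auto simp: bij_betw_def)
  have gf: "?g (f i) = i" if "i < ?n" for i using inj that by (simp add: inv_into_f_f)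
  have fg: "f (?g y) = y" for y using f by (auto simp: bij_betw_def f_inv_into_f)
  have gin: "?g y < ?n" for y using f by (metis atLeastLessThan_iff bij_betw_def inv_into_into UNIV_I)
  have hp: "h p permutes UNIV" if p: "p permutes {0..<?n}" for p
  proof -
    have "bij_betw (f \<circ> (p \<circ> ?g)) UNIV UNIV"
      by (rule bij_betw_trans[OF bij_betw_trans[OF bij_betw_inv_into[OF f] permutes_imp_bij[OF p]] f])
    then show ?thesis unfolding h_def by (intro bij_imp_permutes) (auto simp: o_assoc)
  qed
  have h'q: "h' q permutes {0..<?n}" if q: "q permutes UNIV" for q
  proof (rule bij_imp_permutes)
    have "bij_betw (?g \<circ> (q \<circ> f)) {0..<?n} {0..<?n}"
      by (rule bij_betw_trans[OF bij_betw_trans[OF f permutes_imp_bij[OF q]] bij_betw_inv_into[OF f]])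
    moreover have "bij_betw (h' q) {0..<?n} {0..<?n} = bij_betw (?g \<circ> (q \<circ> f)) {0..<?n} {0..<?n}"
      by (rule bij_betw_cong) (simp add: h'_def)
    ultimately show "bij_betw (h' q) {0..<?n} {0..<?n}" by simp
    show "\<And>x. x \<notin> {0..<?n} \<Longrightarrow> h' q x = x" by (auto simp: h'_def)
  qed
  have hh': "h (h' q) = q" for q
    by (rule ext) (simp add: h_def h'_def gin fg)
  have h'h: "h' (h p) = p" if p: "p permutes {0..<?n}" for p
  proof (rule ext)
    fix i
    show "h' (h p) i = p i"
    proof (cases "i < ?n")
      case True
      then have "p i < ?n" using permutes_in_image[OF p, of i] by simp
      then show ?thesis using True by (simp add: h_def h'_def gf)
    next
      case False
      have "p i = i" using p False by (intro permutes_not_in[OF p]) auto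
      then show ?thesis using False by (simp add: h'_def)
    qed
  qed
  have bij: "bij_betw h {p. p permutes {0..<?n}} {q. q permutes UNIV}"
    apply (rule bij_betw_byWitness[where f'=h'])
    using h'h apply blast
    using hh' apply blast
    using hp apply blast
    using h'q apply blast
    done
  have "Determinants.det M = (\<Sum>q\<in>{q. q permutes UNIV}. of_int (sign q) * (\<Prod>y\<in>UNIV. M $ y $ q y))"
    unfolding Determinants.det_def by simp
  also have "\<dots> = (\<Sum>p\<in>{p. p permutes {0..<?n}}. of_int (sign (h p)) * (\<Prod>y\<in>UNIV. M $ y $ h p y))"
    by (rule sum.reindex_bij_betw[OF bij, symmetric])
  also have "\<dots> = (\<Sum>p\<in>{p. p permutes {0..<?n}}. of_int (sign p) * (\<Prod>i\<in>{0..<?n}. M $ f i $ f (p i)))"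
  proof (rule sum.cong[OF refl])
    fix p assume "p \<in> {p. p permutes {0..<?n}}"
    then have p: "p permutes {0..<?n}" by simp
    have "sign (h p) = sign p" unfolding h_def by (rule sign_conj_bridge[OF f p])
    moreover have "(\<Prod>y\<in>UNIV. M $ y $ h p y) = (\<Prod>i\<in>{0..<?n}. M $ f i $ h p (f i))"
      by (rule prod.reindex_bij_betw[OF f, symmetric])
    moreover have "(\<Prod>i\<in>{0..<?n}. M $ f i $ h p (f i)) = (\<Prod>i\<in>{0..<?n}. M $ f i $ f (p i))"
      by (rule prod.cong) (auto simp: h_def gf)
    ultimately show "of_int (sign (h p)) * (\<Prod>y\<in>UNIV. M $ y $ h p y) = of_int (sign p) * (\<Prod>i\<in>{0..<?n}. M $ f i $ f (p i))"
      by simp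
  qed
  also have "\<dots> = Determinant.det (mat ?n ?n (\<lambda>(i,j). M $ f i $ f j))"
  proof -
    define X where "X = mat ?n ?n (\<lambda>(i,j). M $ f i $ f j)"
    have "Determinant.det X = (\<Sum>p\<in>{p. p permutes {0..<?n}}. of_int (sign p) * (\<Prod>i\<in>{0..<?n}. X $$ (i, p i)))"
      unfolding Determinant.det_def X_def by simp
    also have "\<dots> = (\<Sum>p\<in>{p. p permutes {0..<?n}}. of_int (sign p) * (\<Prod>i\<in>{0..<?n}. M $ f i $ f (p i)))"
    proof (rule sum.cong[OF refl])
      fix p assume "p \<in> {p. p permutes {0..<?n}}"
      then have p: "p permutes {0..<?n}" by simp
      have "(\<Prod>i\<in>{0..<?n}. X $$ (i, p i)) = (\<Prod>i\<in>{0..<?n}. M $ f i $ f (p i))"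
      proof (rule prod.cong[OF refl])
        fix i assume i: "i \<in> {0..<?n}"
        then have "p i < ?n" using p by (metis atLeastLessThan_iff permutes_in_image)
        then show "X $$ (i, p i) = M $ f i $ f (p i)" using i unfolding X_def by simp
      qed
      then show "of_int (sign p) * (\<Prod>i\<in>{0..<?n}. X $$ (i, p i)) = of_int (sign p) * (\<Prod>i\<in>{0..<?n}. M $ f i $ f (p i))"
        by simp
    qed
    finally show ?thesis unfolding X_def by simp
  qed
  finally show ?thesis .
qed


definition fmul :: "('n::finite \<Rightarrow> 'n \<Rightarrow> real) \<Rightarrow> ('n \<Rightarrow> 'n \<Rightarrow> real) \<Rightarrow> 'n \<Rightarrow> 'n \<Rightarrow> real" where
  "fmul P Q = (\<lambda>i j. \<Sum>k\<in>UNIV. P i k * Q k j)"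

definition fid :: "'n::finite \<Rightarrow> 'n \<Rightarrow> real" where
  "fid = (\<lambda>i j. if i = j then 1 else 0)"

primrec fpow :: "('n::finite \<Rightarrow> 'n \<Rightarrow> real) \<Rightarrow> nat \<Rightarrow> 'n \<Rightarrow> 'n \<Rightarrow> real" where
  "fpow A 0 = fid"
| "fpow A (Suc m) = fmul (fpow A m) A"

definition act :: "('n::finite \<Rightarrow> 'n \<Rightarrow> real) \<Rightarrow> ('n \<Rightarrow> real) \<Rightarrow> 'n \<Rightarrow> real" where
  "act P y = (\<lambda>i. \<Sum>j\<in>UNIV. P i j * y j)"

definition ip :: "('n::finite \<Rightarrow> real) \<Rightarrow> ('n \<Rightarrow> real) \<Rightarrow> real" where
  "ip y z = (\<Sum>i\<in>UNIV. y i * z i)"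

definition symm :: "('n \<Rightarrow> 'n \<Rightarrow> real) \<Rightarrow> bool" where
  "symm P \<longleftrightarrow> (\<forall>i j. P i j = P j i)"

definition ftrace :: "('n::finite \<Rightarrow> 'n \<Rightarrow> real) \<Rightarrow> real" where
  "ftrace P = (\<Sum>i\<in>UNIV. P i i)"

lemma fmul_assoc: "fmul (fmul P Q) R = fmul P (fmul Q R)"
proof (intro ext)
  fix i j
  have "fmul (fmul P Q) R i j = (\<Sum>l\<in>UNIV. \<Sum>k\<in>UNIV. P i k * Q k l * R l j)"
    by (simp add: fmul_def sum_distrib_right)
  also have "\<dots> = (\<Sum>k\<in>UNIV. \<Sum>l\<in>UNIV. P i k * Q k l * R l j)"
    by (rule sum.swap)
  also have "\<dots> = fmul P (fmul Q R) i j"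
    by (simp add: fmul_def sum_distrib_left mult.assoc)
  finally show "fmul (fmul P Q) R i j = fmul P (fmul Q R) i j" .
qed

lemma fmul_fid_left[simp]: "fmul fid P = P"
proof (intro ext)
  fix i j
  have "fmul fid P i j = (\<Sum>k\<in>UNIV. if i = k then P k j else 0)"
    unfolding fmul_def fid_def by (rule sum.cong) auto
  then show "fmul fid P i j = P i j" by simp
qed

lemma fmul_fid_right[simp]: "fmul P fid = P"
proof (intro ext)
  fix i j
  have "fmul P fid i j = (\<Sum>k\<in>UNIV. if k = j then P i k else 0)"
    unfolding fmul_def fid_def by (rule sum.cong) auto
  then show "fmul P fid i j = P i j" by simp
qed

lemma fpow_add: "fpow A (m + k) = fmul (fpow A m) (fpow A k)"
  by (induction k) (simp_all add: fmul_assoc)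

lemma fpow_one: "fpow A 1 = A"
  by simp

lemma fpow_Suc': "fpow A (Suc m) = fmul A (fpow A m)"
  using fpow_add[of A 1 m] by simp

lemma symm_fpow:
  assumes "symm A" shows "symm (fpow A m)"
proof (induction m)
  case 0 then show ?case by (simp add: symm_def fid_def)
next
  case (Suc m)
  show ?case unfolding symm_def
  proof (intro allI)
    fix i j
    have "fpow A (Suc m) i j = (\<Sum>k\<in>UNIV. fpow A m i k * A k j)" by (simp add: fmul_def)
    also have "\<dots> = (\<Sum>k\<in>UNIV. A j k * fpow A m k i)"
      using Suc assms by (simp add: symm_def mult.commute)
    also have "\<dots> = fpow A (Suc m) j i" by (simp only: fpow_Suc' fmul_def)
    finally show "fpow A (Suc m) i j = fpow A (Suc m) j i" .
  qed
qed

lemma rowsum_fpow: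
  assumes "\<And>i. (\<Sum>j\<in>UNIV. A i j) = d"
  shows "(\<Sum>j\<in>UNIV. fpow A m i j) = d ^ m"
proof (induction m arbitrary: i)
  case 0 then show ?case by (simp add: fid_def)
next
  case (Suc m)
  have "(\<Sum>j\<in>UNIV. fpow A (Suc m) i j) = (\<Sum>k\<in>UNIV. fpow A m i k * (\<Sum>j\<in>UNIV. A k j))"
    by (simp add: fmul_def sum_distrib_left) (rule sum.swap)
  also have "\<dots> = (\<Sum>k\<in>UNIV. fpow A m i k) * d" using assms by (simp add: sum_distrib_right)
  also have "\<dots> = d * d ^ m" using Suc by simp
  finally show ?case by simp
qed

lemma nonneg_fpow:
  assumes "\<And>i j. A i j \<ge> 0" shows "fpow A m i j \<ge> 0"
  using assms by (induction m arbitrary: i j) (auto simp: fid_def fmul_def intro!: sum_nonneg)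

lemma act_fmul: "act (fmul P Q) y = act P (act Q y)"
proof (intro ext)
  fix i
  have "act (fmul P Q) y i = (\<Sum>j\<in>UNIV. \<Sum>k\<in>UNIV. P i k * Q k j * y j)"
    by (simp add: act_def fmul_def sum_distrib_right)
  also have "\<dots> = (\<Sum>k\<in>UNIV. \<Sum>j\<in>UNIV. P i k * Q k j * y j)" by (rule sum.swap)
  also have "\<dots> = act P (act Q y) i" by (simp add: act_def sum_distrib_left mult.assoc)
  finally show "act (fmul P Q) y i = act P (act Q y) i" .
qed

lemma ip_act_symm:
  assumes "symm P" shows "ip (act P y) z = ip y (act P z)"
proof -
  have "ip (act P y) z = (\<Sum>i\<in>UNIV. \<Sum>j\<in>UNIV. P i j * y j * z i)"
    by (simp add: ip_def act_def sum_distrib_right)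
  also have "\<dots> = (\<Sum>j\<in>UNIV. \<Sum>i\<in>UNIV. P i j * y j * z i)" by (rule sum.swap)
  also have "\<dots> = ip y (act P z)"
    using assms by (simp add: ip_def act_def sum_distrib_left symm_def mult.commute mult.left_commute)
  finally show ?thesis .
qed

lemma ip_comm: "ip y z = ip z y" by (simp add: ip_def mult.commute)

lemma ip_self_nonneg: "ip y y \<ge> 0" by (simp add: ip_def sum_nonneg)

lemma ip_cs: "(ip y z)^2 \<le> ip y y * ip z z"
  unfolding ip_def using Cauchy_Schwarz_ineq_sum[of y z UNIV] by (simp add: power2_eq_square)

lemma pow2_lim:
  fixes a b C :: real
  assumes a: "a \<ge> 0" and b: "b \<ge> 0" and h: "\<And>j::nat. a ^ (2 ^ j) \<le> C * b ^ (2 ^ j)"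
  shows "a \<le> b"
proof (rule ccontr)
  assume "\<not> a \<le> b"
  then have ab: "b < a" by simp
  show False
  proof (cases "b = 0")
    case True
    from h[of 0] True ab show False by simp
  next
    case False
    with b have bpos: "b > 0" by simp
    define q where "q = a / b"
    have q1: "q > 1" using ab bpos by (simp add: q_def)
    obtain k where k: "C < q ^ k" using real_arch_pow[OF q1] by blast
    have "k \<le> 2 ^ k" by (simp add: less_imp_le)
    then have "q ^ k \<le> q ^ (2 ^ k)" using q1 by (intro power_increasing) auto
    also have "q ^ (2 ^ k) = a ^ (2 ^ k) / b ^ (2 ^ k)" by (simp add: q_def power_divide)
    also have "\<dots> \<le> C" using h[of k] bpos by (simp add: divide_le_eq)
    finally show False using k by simp
  qed
qed

lemma fpow_1[simp]: "fpow A (Suc 0) = A" by simp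

lemma step_a:
  fixes A :: "'n::finite \<Rightarrow> 'n \<Rightarrow> real"
  assumes sym: "symm A" and rs: "\<And>i. (\<Sum>j\<in>UNIV. A i j) = d"
    and y: "(\<Sum>i\<in>UNIV. y i) = 0"
  shows "ip (act (fpow A m) y) (act (fpow A m) y) \<le> (ftrace (fpow A (2*m)) - d^(2*m)) * ip y y"
proof -
  let ?P = "fpow A m"
  define n where "n = real CARD('n)"
  have npos: "n > 0" by (simp add: n_def)
  define c where "c = d ^ m / n"
  have cn: "c * n = d ^ m" using npos by (simp add: c_def)
  have rsP: "\<And>i. (\<Sum>j\<in>UNIV. ?P i j) = d ^ m" by (rule rowsum_fpow[OF rs])
  have symP: "symm ?P" by (rule symm_fpow[OF sym])
  have e1: "act ?P y i = (\<Sum>j\<in>UNIV. (?P i j - c) * y j)" for i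
  proof -
    have "(\<Sum>j\<in>UNIV. (?P i j - c) * y j) = (\<Sum>j\<in>UNIV. ?P i j * y j) - c * (\<Sum>j\<in>UNIV. y j)"
      by (simp add: algebra_simps sum_subtractf sum_distrib_left)
    then show ?thesis using y by (simp add: act_def)
  qed
  have e2: "(act ?P y i)^2 \<le> (\<Sum>j\<in>UNIV. (?P i j - c)^2) * ip y y" for i
    unfolding e1 ip_def using Cauchy_Schwarz_ineq_sum[of "\<lambda>j. ?P i j - c" y UNIV]
    by (simp add: power2_eq_square)
  have "ip (act ?P y) (act ?P y) = (\<Sum>i\<in>UNIV. (act ?P y i)^2)"
    by (simp add: ip_def power2_eq_square)
  also have "\<dots> \<le> (\<Sum>i\<in>UNIV. (\<Sum>j\<in>UNIV. (?P i j - c)^2) * ip y y)"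
    by (rule sum_mono) (rule e2)
  also have "\<dots> = (\<Sum>i\<in>UNIV. \<Sum>j\<in>UNIV. (?P i j - c)^2) * ip y y"
    by (simp add: sum_distrib_right)
  also have "(\<Sum>i\<in>UNIV. \<Sum>j\<in>UNIV. (?P i j - c)^2) = ftrace (fpow A (2*m)) - d^(2*m)"
  proof -
    have "(\<Sum>i\<in>UNIV. \<Sum>j\<in>UNIV. (?P i j - c)^2)
        = (\<Sum>i\<in>UNIV. (\<Sum>j\<in>UNIV. ?P i j * ?P j i) - 2 * c * (\<Sum>j\<in>UNIV. ?P i j) + n * c^2)"
    proof (rule sum.cong[OF refl])
      fix i
      have "(\<Sum>j\<in>UNIV. (?P i j - c)^2) = (\<Sum>j\<in>UNIV. ?P i j * ?P j i - 2 * c * ?P i j + c^2)"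
        using symP by (intro sum.cong) (auto simp: symm_def power2_eq_square algebra_simps)
      also have "\<dots> = (\<Sum>j\<in>UNIV. ?P i j * ?P j i) - 2 * c * (\<Sum>j\<in>UNIV. ?P i j) + n * c^2"
        by (simp add: sum.distrib sum_subtractf sum_distrib_left n_def)
      finally show "(\<Sum>j\<in>UNIV. (?P i j - c)^2) = (\<Sum>j\<in>UNIV. ?P i j * ?P j i) - 2 * c * (\<Sum>j\<in>UNIV. ?P i j) + n * c^2" .
    qed
    also have "\<dots> = (\<Sum>i\<in>UNIV. \<Sum>j\<in>UNIV. ?P i j * ?P j i) - n * (2 * c * d ^ m) + n * (n * c^2)"
      using rsP by (simp add: sum.distrib sum_subtractf n_def)
    also have "(\<Sum>i\<in>UNIV. \<Sum>j\<in>UNIV. ?P i j * ?P j i) = ftrace (fpow A (2*m))"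
      by (simp add: ftrace_def mult_2 fpow_add fmul_def)
    also have "n * (2 * c * d ^ m) = 2 * d^(2*m)"
    proof -
      have "n * (2 * c * d ^ m) = 2 * (c * n) * d ^ m" by (simp add: algebra_simps)
      also have "\<dots> = 2 * (d^m * d^m)" unfolding cn by simp
      also have "d^m * d^m = d^(2*m)" by (simp add: mult_2 power_add)
      finally show ?thesis .
    qed
    also have "n * (n * c^2) = d^(2*m)"
    proof -
      have "n * (n * c^2) = (c * n) * (c * n)" by (simp add: power2_eq_square algebra_simps)
      also have "\<dots> = d^(2*m)" unfolding cn by (simp add: mult_2 power_add)
      finally show ?thesis .
    qed
    finally show ?thesis by simp
  qed
  finally show ?thesis .
qed

lemma step_b:
  fixes A :: "'n::finite \<Rightarrow> 'n \<Rightarrow> real"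
  assumes sym: "symm A"
  shows "(ip (act A y) (act A y)) ^ (2 ^ j)
     \<le> ip (act (fpow A (2^j)) y) (act (fpow A (2^j)) y) * (ip y y) ^ (2 ^ j - 1)"
proof (induction j)
  case 0 then show ?case by simp
next
  case (Suc j)
  let ?m = "2 ^ j :: nat"
  let ?Q = "fpow A ?m"
  let ?Q2 = "fpow A (2 ^ Suc j)"
  define N where "N v = ip v v" for v :: "'n \<Rightarrow> real"
  have Nn: "N v \<ge> 0" for v unfolding N_def by (rule ip_self_nonneg)
  have "N (act ?Q y) = ip y (act ?Q (act ?Q y))"
    unfolding N_def by (rule ip_act_symm[OF symm_fpow[OF sym]])
  also have "\<dots> = ip y (act ?Q2 y)"
    by (simp add: act_fmul[symmetric] fpow_add[symmetric] mult_2)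
  finally have eq: "N (act ?Q y) = ip y (act ?Q2 y)" .
  have q: "(N (act ?Q y))^2 \<le> N y * N (act ?Q2 y)"
    unfolding eq unfolding N_def by (rule ip_cs)
  have m1: "?m \<ge> 1" by simp
  have "(N (act A y)) ^ (2 ^ Suc j) = ((N (act A y)) ^ ?m)^2"
    by (simp add: power_mult[symmetric] mult.commute)
  also have "\<dots> \<le> (N (act ?Q y) * (N y) ^ (?m - 1))^2"
    using Suc.IH unfolding N_def by (intro power_mono) (simp_all add: ip_self_nonneg)
  also have "\<dots> = (N (act ?Q y))^2 * (N y) ^ (2 * (?m - 1))"
    by (simp add: power_mult_distrib power_mult[symmetric] mult.commute)
  also have "\<dots> \<le> (N y * N (act ?Q2 y)) * (N y) ^ (2 * (?m - 1))"
    by (rule mult_right_mono[OF q]) (simp add: Nn)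
  also have "\<dots> = N (act ?Q2 y) * (N y) ^ (2 ^ Suc j - 1)"
  proof -
    obtain k where k: "?m = Suc k" using m1 by (cases ?m) auto
    have "(2::nat) ^ Suc j = 2 * ?m" by simp
    then have "2 ^ Suc j - 1 = Suc (2 * (?m - 1))" using k by simp
    then show ?thesis by (simp add: mult.commute mult.left_commute)
  qed
  finally show ?case unfolding N_def .
qed

lemma norm_bound:
  fixes A :: "'n::finite \<Rightarrow> 'n \<Rightarrow> real"
  assumes sym: "symm A" and rs: "\<And>i. (\<Sum>j\<in>UNIV. A i j) = d"
    and tr: "\<And>m. m \<ge> 1 \<Longrightarrow> ftrace (fpow A (2*m)) \<le> d^(2*m) + (real CARD('n) - 1) * lam^(2*m)"
    and lam: "lam \<ge> 0"
    and y: "(\<Sum>i\<in>UNIV. y i) = 0"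
  shows "ip (act A y) (act A y) \<le> lam^2 * ip y y"
proof (rule pow2_lim[where C="real CARD('n) - 1"])
  show "ip (act A y) (act A y) \<ge> 0" by (rule ip_self_nonneg)
  show "lam^2 * ip y y \<ge> 0" by (simp add: ip_self_nonneg)
  fix j :: nat
  let ?m = "2 ^ j :: nat"
  have m1: "?m \<ge> 1" by simp
  have "(ip (act A y) (act A y)) ^ ?m \<le> ip (act (fpow A ?m) y) (act (fpow A ?m) y) * (ip y y) ^ (?m - 1)"
    by (rule step_b[OF sym])
  also have "\<dots> \<le> ((ftrace (fpow A (2*?m)) - d^(2*?m)) * ip y y) * (ip y y) ^ (?m - 1)"
    by (rule mult_right_mono[OF step_a[OF sym rs y]]) (simp add: ip_self_nonneg)
  also have "\<dots> \<le> (((real CARD('n) - 1) * lam^(2*?m)) * ip y y) * (ip y y) ^ (?m - 1)"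
    using tr[OF m1] by (intro mult_right_mono) (simp_all add: ip_self_nonneg)
  also have "\<dots> = (real CARD('n) - 1) * (lam^2 * ip y y) ^ ?m"
  proof -
    obtain k where k: "?m = Suc k" using m1 by (cases ?m) auto
    have "ip y y * ip y y ^ (?m - 1) = ip y y ^ ?m" unfolding k by simp
    then show ?thesis by (simp add: power_mult_distrib power_mult mult.assoc)
  qed
  finally show "(ip (act A y) (act A y)) ^ ?m \<le> (real CARD('n) - 1) * (lam^2 * ip y y) ^ ?m" .
qed


lemma sum_ind_mult: "(\<Sum>x\<in>UNIV. (if x \<in> S then 1 else 0) * g x) = (\<Sum>x\<in>S. g x)" for g :: "'n::finite \<Rightarrow> real"
proof -
  have "(\<Sum>x\<in>UNIV. (if x \<in> S then 1 else 0) * g x) = (\<Sum>x\<in>UNIV. if x \<in> S then g x else 0)"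
    by (rule sum.cong) auto
  also have "\<dots> = (\<Sum>x\<in>UNIV \<inter> S. g x)" by (rule sum.inter_restrict[symmetric]) simp
  finally show ?thesis by simp
qed

lemma centered_norm:
  fixes S :: "'n::finite set"
  defines "s \<equiv> real (card S)" and "n \<equiv> real CARD('n)"
  shows "ip (\<lambda>x. (if x \<in> S then 1 else 0) - s / n) (\<lambda>x. (if x \<in> S then 1 else 0) - s / n) \<le> s"
    and "(\<Sum>x\<in>UNIV. (if x \<in> S then 1 else 0) - s / n) = 0"
proof -
  have npos: "n > 0" by (simp add: n_def)
  have s1: "(\<Sum>x\<in>UNIV. (if x \<in> S then 1 else 0 :: real)) = s"
    using sum_ind_mult[of S "\<lambda>_. 1"] by (simp add: s_def)
  show "(\<Sum>x\<in>UNIV. (if x \<in> S then 1 else 0) - s / n) = 0"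
    using npos by (simp add: sum_subtractf s1 n_def)
  have "ip (\<lambda>x. (if x \<in> S then 1 else 0) - s / n) (\<lambda>x. (if x \<in> S then 1 else 0) - s / n)
      = (\<Sum>x\<in>UNIV. (if x \<in> S then 1 else 0) - 2 * (s/n) * (if x \<in> S then 1 else 0) + (s/n)^2)"
    unfolding ip_def by (rule sum.cong) (auto simp: power2_eq_square algebra_simps)
  also have "\<dots> = s - 2 * (s/n) * s + n * (s/n)^2"
    by (simp only: sum.distrib sum_subtractf sum_distrib_left[symmetric] sum_constant s1)
      (simp add: n_def)
  also have "\<dots> = s - s^2 / n" using npos by (simp add: power2_eq_square field_simps)
  also have "\<dots> \<le> s" using npos by simp
  finally show "ip (\<lambda>x. (if x \<in> S then 1 else 0) - s / n) (\<lambda>x. (if x \<in> S then 1 else 0) - s / n) \<le> s" .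
qed

lemma mixing_f:
  fixes A :: "'n::finite \<Rightarrow> 'n \<Rightarrow> real" and S T :: "'n set"
  assumes sym: "symm A" and rs: "\<And>i. (\<Sum>j\<in>UNIV. A i j) = d"
    and nb: "\<And>y. (\<Sum>i\<in>UNIV. y i) = 0 \<Longrightarrow> ip (act A y) (act A y) \<le> lam^2 * ip y y"
    and lam: "lam \<ge> 0"
  shows "(\<Sum>x\<in>S. \<Sum>y\<in>T. A x y) \<le> d * real (card S) * real (card T) / real CARD('n)
            + lam * sqrt (real (card S) * real (card T))"
proof -
  define n where "n = real CARD('n)"
  define s where "s = real (card S)"
  define t where "t = real (card T)"
  have npos: "n > 0" by (simp add: n_def)
  define iS where "iS = (\<lambda>x. if x \<in> S then 1 else 0 :: real)"
  define iT where "iT = (\<lambda>x. if x \<in> T then 1 else 0 :: real)"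
  define xS where "xS = (\<lambda>x. iS x - s / n)"
  define yT where "yT = (\<lambda>x. iT x - t / n)"
  have NxS: "ip xS xS \<le> s" and sxS: "(\<Sum>x\<in>UNIV. xS x) = 0"
    using centered_norm[of S] by (simp_all add: xS_def iS_def s_def n_def)
  have NyT: "ip yT yT \<le> t" and syT: "(\<Sum>x\<in>UNIV. yT x) = 0"
    using centered_norm[of T] by (simp_all add: yT_def iT_def t_def n_def)
  have colsum: "(\<Sum>x\<in>UNIV. A x y) = d" for y
    using rs[of y] sym by (simp add: symm_def)
  have E: "(\<Sum>x\<in>S. \<Sum>y\<in>T. A x y) = ip iS (act A iT)"
  proof -
    have "act A iT x = (\<Sum>y\<in>T. A x y)" for x
      unfolding act_def iT_def using sum_ind_mult[of T "A x"] by (simp add: mult.commute)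
    then have "ip iS (act A iT) = (\<Sum>x\<in>UNIV. iS x * (\<Sum>y\<in>T. A x y))" by (simp add: ip_def)
    also have "\<dots> = (\<Sum>x\<in>S. \<Sum>y\<in>T. A x y)" unfolding iS_def by (rule sum_ind_mult)
    finally show ?thesis by simp
  qed
  have actT: "act A iT x = t / n * d + act A yT x" for x
  proof -
    have "act A iT x = (\<Sum>y\<in>UNIV. A x y * (t / n) + A x y * yT y)"
      unfolding act_def yT_def by (rule sum.cong) (auto simp: algebra_simps)
    also have "\<dots> = (\<Sum>y\<in>UNIV. A x y) * (t / n) + act A yT x"
      by (simp only: sum.distrib act_def sum_distrib_right[symmetric])
    also have "\<dots> = t / n * d + act A yT x" by (simp add: rs)
    finally show ?thesis .
  qed
  have sumAy: "(\<Sum>x\<in>UNIV. act A yT x) = 0"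
  proof -
    have "(\<Sum>x\<in>UNIV. act A yT x) = (\<Sum>y\<in>UNIV. \<Sum>x\<in>UNIV. A x y * yT y)"
      unfolding act_def by (rule sum.swap)
    also have "\<dots> = (\<Sum>y\<in>UNIV. d * yT y)"
      by (rule sum.cong[OF refl]) (simp add: sum_distrib_right[symmetric] colsum)
    also have "\<dots> = 0" by (simp add: sum_distrib_left[symmetric] syT)
    finally show ?thesis .
  qed
  have sumS: "(\<Sum>x\<in>UNIV. iS x) = s"
    using sum_ind_mult[of S "\<lambda>_. 1"] by (simp add: iS_def s_def)
  have e1: "ip iS (act A iT) = (\<Sum>x\<in>UNIV. iS x * (t / n * d)) + ip iS (act A yT)"
    by (simp add: ip_def actT algebra_simps sum.distrib)
  have e2: "(\<Sum>x\<in>UNIV. iS x * (t / n * d)) = (\<Sum>x\<in>UNIV. iS x) * (t / n * d)"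
    by (simp only: sum_distrib_right[symmetric])
  have e3: "ip iS (act A yT) = ip xS (act A yT) + s / n * (\<Sum>x\<in>UNIV. act A yT x)"
    by (simp add: ip_def xS_def algebra_simps sum.distrib sum_subtractf sum_distrib_left)
  have e4: "ip xS (act A yT) \<le> lam * sqrt (s * t)"
  proof -
    have "(ip xS (act A yT))^2 \<le> ip xS xS * ip (act A yT) (act A yT)" by (rule ip_cs)
    also have "\<dots> \<le> s * (lam^2 * t)"
    proof (rule mult_mono)
      show "ip xS xS \<le> s" by (rule NxS)
      have "ip (act A yT) (act A yT) \<le> lam^2 * ip yT yT" by (rule nb[OF syT])
      also have "\<dots> \<le> lam^2 * t" using NyT by (simp add: mult_left_mono)
      finally show "ip (act A yT) (act A yT) \<le> lam^2 * t" .
      show "0 \<le> s" by (simp add: s_def)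
      show "0 \<le> ip (act A yT) (act A yT)" by (rule ip_self_nonneg)
    qed
    also have "\<dots> = (lam * sqrt (s * t))^2"
      by (simp add: power_mult_distrib s_def t_def algebra_simps)
    finally have sq: "(ip xS (act A yT))^2 \<le> (lam * sqrt (s * t))^2" .
    have sq0: "0 \<le> sqrt (s * t)" by (simp add: s_def t_def)
    show ?thesis by (rule power2_le_imp_le[OF sq mult_nonneg_nonneg[OF lam sq0]])
  qed
  have "ip iS (act A iT) = d * s * t / n + ip xS (act A yT)"
    unfolding e1 e2 e3 sumS sumAy by simp
  then have "ip iS (act A iT) \<le> d * s * t / n + lam * sqrt (s * t)" using e4 by simp
  then show ?thesis unfolding E by (simp add: s_def t_def n_def)
qed


lemma map_of_real_prod:
  "map_poly (of_real :: real \<Rightarrow> complex) (prod_list (map (\<lambda>e. [:-e,1:]) es)) = prod_list (map (\<lambda>e. [:-of_real e,1:]) es)"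
proof -
  interpret ofr: map_poly_inj_idom_hom "of_real :: real \<Rightarrow> complex" ..
  show ?thesis
  proof (induction es)
    case Nil then show ?case by simp
  next
    case (Cons a es)
    have "map_poly (of_real :: real \<Rightarrow> complex) ([:-a,1:] * prod_list (map (\<lambda>e. [:-e,1:]) es))
        = map_poly of_real [:-a,1:] * map_poly of_real (prod_list (map (\<lambda>e. [:-e,1:]) es))"
      by (rule ofr.hom_mult)
    then show ?case using Cons by simp
  qed
qed

lemma map_of_real_inj:
  "map_poly (of_real :: real \<Rightarrow> complex) p = map_poly of_real q \<Longrightarrow> p = q"
proof -
  interpret ofr: map_poly_inj_idom_hom "of_real :: real \<Rightarrow> complex" ..
  show "map_poly (of_real :: real \<Rightarrow> complex) p = map_poly of_real q \<Longrightarrow> p = q" by simp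
qed

lemma sym_real_factor:
  fixes A :: "real mat"
  assumes A: "A \<in> carrier_mat n n" and sym: "\<And>i j. i < n \<Longrightarrow> j < n \<Longrightarrow> A $$ (i,j) = A $$ (j,i)"
  shows "\<exists>es. char_poly A = (\<Prod>e\<leftarrow>es. [:-e,1:]) \<and> length es = n"
proof -
  let ?Ac = "map_mat complex_of_real A"
  have Ac: "?Ac \<in> carrier_mat n n" using A by simp
  obtain as where as: "char_poly ?Ac = (\<Prod>a\<leftarrow>as. [:-a,1:])" and las: "length as = n"
    using char_poly_factorized[OF Ac] by blast
  have real: "of_real (Re a) = a" if a: "a \<in> set as" for a
  proof -
    have "poly (char_poly ?Ac) a = 0" unfolding as by (rule linear_poly_root[OF a])
    then have "eigenvalue ?Ac a" using eigenvalue_root_char_poly[OF Ac] by simp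
    then obtain v where ev: "eigenvector ?Ac v a" unfolding eigenvalue_def by blast
    then have v: "v \<in> carrier_vec n" and v0: "v \<noteq> 0\<^sub>v n" and Av: "?Ac *\<^sub>v v = a \<cdot>\<^sub>v v"
      using A by (auto simp: eigenvector_def)
    define w where "w i = vec_index v i" for i
    have Avi: "(\<Sum>j\<in>{0..<n}. complex_of_real (A $$ (i,j)) * w j) = a * w i" if i: "i < n" for i
    proof -
      have "vec_index (?Ac *\<^sub>v v) i = a * w i" using Av i v by (simp add: w_def)
      moreover have "vec_index (?Ac *\<^sub>v v) i = (\<Sum>j\<in>{0..<n}. complex_of_real (A $$ (i,j)) * w j)"
        using i A v by (simp add: scalar_prod_def w_def)
      ultimately show ?thesis by simp
    qed
    define s where "s = (\<Sum>i\<in>{0..<n}. cnj (w i) * (\<Sum>j\<in>{0..<n}. complex_of_real (A $$ (i,j)) * w j))"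
    define N where "N = (\<Sum>i\<in>{0..<n}. cnj (w i) * w i)"
    have s1: "s = a * N"
    proof -
      have "s = (\<Sum>i\<in>{0..<n}. cnj (w i) * (a * w i))" unfolding s_def by (rule sum.cong) (simp_all add: Avi)
      also have "\<dots> = a * N" unfolding N_def by (simp add: sum_distrib_left mult.commute mult.left_commute)
      finally show ?thesis .
    qed
    have "cnj s = (\<Sum>i\<in>{0..<n}. \<Sum>j\<in>{0..<n}. complex_of_real (A $$ (i,j)) * w i * cnj (w j))"
      unfolding s_def by (simp add: sum_distrib_left mult.commute mult.left_commute)
    also have "\<dots> = (\<Sum>j\<in>{0..<n}. \<Sum>i\<in>{0..<n}. complex_of_real (A $$ (i,j)) * w i * cnj (w j))"
      by (rule sum.swap)
    also have "\<dots> = s"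
      unfolding s_def by (intro sum.cong refl) (simp add: sum_distrib_left sym mult.commute mult.left_commute)
    finally have cs: "cnj s = s" .
    have Nreal: "N = of_real (\<Sum>i\<in>{0..<n}. (cmod (w i))^2)"
      unfolding N_def of_real_sum by (intro sum.cong refl) (simp only: complex_norm_square mult.commute)
    have "\<exists>i<n. w i \<noteq> 0"
    proof (rule ccontr)
      assume "\<not> (\<exists>i<n. w i \<noteq> 0)"
      then have "v = 0\<^sub>v n" using v by (intro eq_vecI) (auto simp: w_def)
      with v0 show False by simp
    qed
    then obtain i0 where i0: "i0 < n" "w i0 \<noteq> 0" by blast
    have "(\<Sum>i\<in>{0..<n}. (cmod (w i))^2) > 0"
    proof -
      have "(cmod (w i0))^2 \<le> (\<Sum>i\<in>{0..<n}. (cmod (w i))^2)"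
        using i0 by (intro member_le_sum) auto
      moreover have "(cmod (w i0))^2 > 0" using i0 by simp
      ultimately show ?thesis by linarith
    qed
    then have N0: "N \<noteq> 0" unfolding Nreal by (subst of_real_eq_0_iff) linarith
    have "cnj N = N" unfolding Nreal by simp
    then have "cnj a * N = a * N" using cs s1 by simp
    then have "cnj a = a" using N0 by simp
    then show ?thesis by (metis Reals_cnj_iff Reals_def imageE of_real_Re)
  qed
  define es where "es = map Re as"
  have as_es: "as = map complex_of_real es" unfolding es_def using real
    by (simp add: map_idI)
  have "map_poly complex_of_real (char_poly A) = char_poly ?Ac"
    by (rule of_real_hom.char_poly_hom[OF A, symmetric])
  also have "\<dots> = map_poly complex_of_real (\<Prod>e\<leftarrow>es. [:-e,1:])"
    unfolding as as_es map_of_real_prod by (simp add: comp_def)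
  finally have "char_poly A = (\<Prod>e\<leftarrow>es. [:-e,1:])" by (rule map_of_real_inj)
  moreover have "length es = n" using las by (simp add: es_def)
  ultimately show ?thesis by blast
qed

definition mtr :: "real mat \<Rightarrow> real" where
  "mtr X = (\<Sum>i\<in>{0..<dim_row X}. X $$ (i,i))"

lemma mtr_comm:
  assumes X: "X \<in> carrier_mat n n" and Y: "Y \<in> carrier_mat n n"
  shows "mtr (X * Y) = mtr (Y * X)"
proof -
  have "mtr (X * Y) = (\<Sum>i\<in>{0..<n}. \<Sum>k\<in>{0..<n}. X $$ (i,k) * Y $$ (k,i))"
    unfolding mtr_def using X Y by (intro sum.cong) (auto simp: scalar_prod_def)
  also have "\<dots> = (\<Sum>k\<in>{0..<n}. \<Sum>i\<in>{0..<n}. X $$ (i,k) * Y $$ (k,i))" by (rule sum.swap)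
  also have "\<dots> = mtr (Y * X)"
    unfolding mtr_def using X Y by (intro sum.cong) (auto simp: scalar_prod_def mult.commute)
  finally show ?thesis .
qed

lemma ut_pow:
  fixes B :: "real mat"
  assumes B: "B \<in> carrier_mat n n" and ut: "upper_triangular B"
  shows "upper_triangular (B ^\<^sub>m k) \<and> (\<forall>i<n. (B ^\<^sub>m k) $$ (i,i) = (B $$ (i,i))^k)"
proof (induction k)
  case 0
  then show ?case using B by simp
next
  case (Suc k)
  let ?X = "B ^\<^sub>m k"
  have X: "?X \<in> carrier_mat n n" using B by simp
  have utX: "?X $$ (i,l) = 0" if "i < n" "l < i" for i l
    using Suc.IH X that by (auto simp: upper_triangular_def)
  have utB: "B $$ (l,j) = 0" if "l < n" "j < l" for l j
    using ut B that by (auto simp: upper_triangular_def)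
  have ent: "(B ^\<^sub>m Suc k) $$ (i,j) = (\<Sum>l\<in>{0..<n}. ?X $$ (i,l) * B $$ (l,j))" if "i < n" "j < n" for i j
    using X B that by (simp add: scalar_prod_def)
  have "upper_triangular (B ^\<^sub>m Suc k)"
    unfolding upper_triangular_def
  proof (intro allI impI)
    fix i j assume i: "i < dim_row (B ^\<^sub>m Suc k)" and j: "j < i"
    then have i': "i < n" using B by simp
    have "(\<Sum>l\<in>{0..<n}. ?X $$ (i,l) * B $$ (l,j)) = 0"
    proof (rule sum.neutral, intro ballI)
      fix l assume l: "l \<in> {0..<n}"
      show "?X $$ (i,l) * B $$ (l,j) = 0"
      proof (cases "l < i")
        case True then show ?thesis using utX[OF i'] by simp
      next
        case False then show ?thesis using utB l j by simp
      qed
    qed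
    then show "(B ^\<^sub>m Suc k) $$ (i,j) = 0" using ent[OF i'] j i' by simp
  qed
  moreover have "(B ^\<^sub>m Suc k) $$ (i,i) = (B $$ (i,i))^Suc k" if i: "i < n" for i
  proof -
    have "(\<Sum>l\<in>{0..<n}. ?X $$ (i,l) * B $$ (l,i)) = (\<Sum>l\<in>{0..<n}. if l = i then ?X $$ (i,i) * B $$ (i,i) else 0)"
    proof (rule sum.cong[OF refl])
      fix l assume l: "l \<in> {0..<n}"
      show "?X $$ (i,l) * B $$ (l,i) = (if l = i then ?X $$ (i,i) * B $$ (i,i) else 0)"
      proof (cases "l < i")
        case True then show ?thesis using utX[OF i] by simp
      next
        case False
        then show ?thesis using utB l by (cases "l = i") auto
      qed
    qed
    also have "\<dots> = ?X $$ (i,i) * B $$ (i,i)" using i by simp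
    also have "\<dots> = (B $$ (i,i))^Suc k" using Suc.IH i by simp
    finally show ?thesis using ent[OF i i] by simp
  qed
  ultimately show ?case by blast
qed

lemma trace_pow_schur:
  fixes A :: "real mat"
  assumes A: "A \<in> carrier_mat n n" and cp: "char_poly A = (\<Prod>e\<leftarrow>es. [:-e,1:])"
  shows "mtr (A ^\<^sub>m k) = sum_list (map (\<lambda>e. e^k) es)"
proof -
  obtain B P Q where sd: "schur_decomposition A es = (B,P,Q)" by (cases "schur_decomposition A es") auto
  from schur_decomposition[OF A cp sd]
  have wit: "similar_mat_wit A B P Q" and ut: "upper_triangular B" and dg: "diag_mat B = es" by auto
  from wit A have B: "B \<in> carrier_mat n n" and P: "P \<in> carrier_mat n n" and Q: "Q \<in> carrier_mat n n"
    and QP: "Q * P = 1\<^sub>m n"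
    by (auto simp: similar_mat_wit_def Let_def)
  have pw: "A ^\<^sub>m k = P * B ^\<^sub>m k * Q" by (rule similar_mat_wit_pow_id[OF wit])
  have Bk: "B ^\<^sub>m k \<in> carrier_mat n n" using B by simp
  have "mtr (A ^\<^sub>m k) = mtr ((P * B ^\<^sub>m k) * Q)" unfolding pw ..
  also have "\<dots> = mtr (Q * (P * B ^\<^sub>m k))" by (rule mtr_comm[OF mult_carrier_mat[OF P Bk] Q])
  also have "Q * (P * B ^\<^sub>m k) = (Q * P) * B ^\<^sub>m k" using P Q Bk by (simp add: assoc_mult_mat)
  also have "\<dots> = B ^\<^sub>m k" unfolding QP by (rule left_mult_one_mat[OF Bk])
  also have "mtr (B ^\<^sub>m k) = (\<Sum>i\<in>{0..<n}. (B $$ (i,i))^k)"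
    unfolding mtr_def using ut_pow[OF B ut] B by simp
  also have "\<dots> = sum_list (map (\<lambda>e. e^k) es)"
    unfolding dg[symmetric] diag_mat_def using B by (simp add: interv_sum_list_conv_sum_set_nat comp_def)
  finally show ?thesis .
qed


lemma proots_prod_lin: "proots (\<Prod>e\<leftarrow>es. [:-e,1:]) = mset (es :: real list)"
proof (induction es)
  case Nil then show ?case by simp
next
  case (Cons a es)
  have nz: "(\<Prod>e\<leftarrow>es. [:-e,1:]) \<noteq> (0 :: real poly)"
  proof -
    have lin: "[:-e,1:] \<noteq> (0::real poly)" for e by simp
    have "0 \<notin> (\<lambda>e. [:-e,1:]) ` set es"
    proof
      assume "0 \<in> (\<lambda>e. [:-e,1:]) ` set es"
      then obtain e where "[:-e,1:] = (0::real poly)" by auto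
      with lin show False by blast
    qed
    then show ?thesis unfolding prod_list_zero_iff set_map .
  qed
  have "proots ([:-a,1:] * (\<Prod>e\<leftarrow>es. [:-e,1:])) = proots [:-a,1:] + proots (\<Prod>e\<leftarrow>es. [:-e,1:])"
    by (rule proots_mult[OF _ nz]) simp
  then show ?case using Cons proots_linear_factor[of "-a"] by simp
qed

lemma spectral_bridge:
  fixes adj :: "'n::finite \<Rightarrow> 'n \<Rightarrow> bool"
  assumes sym: "\<And>u v. adj u v \<Longrightarrow> adj v u"
  defines "a \<equiv> (\<lambda>x y. if adj x y then 1 else 0 :: real)"
  shows "\<exists>es. length es = CARD('n) \<and> adj_eigenvalues adj = sort es
            \<and> (\<forall>k. ftrace (fpow a k) = sum_list (map (\<lambda>e. e^k) es))"
proof -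
  let ?n = "CARD('n)"
  obtain f where f: "bij_betw f {0..<?n} (UNIV :: 'n set)"
    using ex_bij_betw_nat_finite[of "UNIV :: 'n set"] by auto
  have inj: "inj_on f {0..<?n}" using f by (auto simp: bij_betw_def)
  define AJ where "AJ = mat ?n ?n (\<lambda>(i,j). a (f i) (f j))"
  have AJ: "AJ \<in> carrier_mat ?n ?n" by (simp add: AJ_def)
  have symAJ: "AJ $$ (i,j) = AJ $$ (j,i)" if "i < ?n" "j < ?n" for i j
    using that sym by (auto simp: AJ_def a_def)
  define C :: "real poly ^'n^'n" where "C = (\<chi> i j. (if i = j then [:0, 1:] else 0) - [:adj_matrix adj $ i $ j:])"
  have cp: "char_poly_mat (adj_matrix adj) = char_poly AJ"
  proof -
    have "char_poly_mat (adj_matrix adj) = Determinants.det C" by (simp add: char_poly_mat_def C_def)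
    also have "\<dots> = Determinant.det (mat ?n ?n (\<lambda>(i,j). C $ f i $ f j))" by (rule det_bridge[OF f])
    also have "mat ?n ?n (\<lambda>(i,j). C $ f i $ f j) = char_poly_matrix AJ"
    proof (rule eq_matI)
      fix i j assume i: "i < dim_row (char_poly_matrix AJ)" and j: "j < dim_col (char_poly_matrix AJ)"
      then have i': "i < ?n" and j': "j < ?n" using char_poly_matrix_closed[OF AJ] by auto
      have fij: "(f i = f j) = (i = j)" using inj i' j' by (auto simp: inj_on_eq_iff)
      show "mat ?n ?n (\<lambda>(i,j). C $ f i $ f j) $$ (i,j) = char_poly_matrix AJ $$ (i,j)"
        using i' j' fij by (simp add: C_def char_poly_matrix_def AJ_def adj_matrix_def a_def)
    qed (use char_poly_matrix_closed[OF AJ] in auto)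
    finally show ?thesis by (simp add: char_poly_def)
  qed
  obtain es where es: "char_poly AJ = (\<Prod>e\<leftarrow>es. [:-e,1:])" and les: "length es = ?n"
    using sym_real_factor[OF AJ symAJ] by blast
  have ev: "adj_eigenvalues adj = sort es"
    unfolding adj_eigenvalues_def cp es proots_prod_lin by simp
  have pw: "AJ ^\<^sub>m k = mat ?n ?n (\<lambda>(i,j). fpow a k (f i) (f j))" for k
  proof (induction k)
    case 0
    show ?case
      by (rule eq_matI) (use inj in \<open>auto simp: fid_def inj_on_eq_iff AJ_def\<close>)
  next
    case (Suc k)
    show ?case
    proof (rule eq_matI)
      fix i j assume i: "i < dim_row (mat ?n ?n (\<lambda>(i,j). fpow a (Suc k) (f i) (f j)))"
        and j: "j < dim_col (mat ?n ?n (\<lambda>(i,j). fpow a (Suc k) (f i) (f j)))"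
      then have i': "i < ?n" and j': "j < ?n" by auto
      have AJe: "AJ $$ (l,j) = a (f l) (f j)" if "l < ?n" "j < ?n" for l j using that by (simp add: AJ_def)
      have "(AJ ^\<^sub>m Suc k) $$ (i,j) = (\<Sum>l\<in>{0..<?n}. (AJ ^\<^sub>m k) $$ (i,l) * AJ $$ (l,j))"
        using i' j' AJ by (simp add: scalar_prod_def)
      also have "\<dots> = (\<Sum>l\<in>{0..<?n}. fpow a k (f i) (f l) * a (f l) (f j))"
        using i' j' by (intro sum.cong refl) (simp add: Suc AJe)
      also have "\<dots> = (\<Sum>y\<in>UNIV. fpow a k (f i) y * a y (f j))"
        by (rule sum.reindex_bij_betw[OF f])
      also have "\<dots> = fpow a (Suc k) (f i) (f j)" by (simp add: fmul_def)
      finally show "(AJ ^\<^sub>m Suc k) $$ (i,j) = mat ?n ?n (\<lambda>(i,j). fpow a (Suc k) (f i) (f j)) $$ (i,j)"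
        using i' j' by simp
    qed (use AJ in auto)
  qed
  have tr: "ftrace (fpow a k) = sum_list (map (\<lambda>e. e^k) es)" for k
  proof -
    have "mtr (AJ ^\<^sub>m k) = (\<Sum>i\<in>{0..<?n}. fpow a k (f i) (f i))"
      unfolding mtr_def pw by simp
    also have "\<dots> = ftrace (fpow a k)" unfolding ftrace_def by (rule sum.reindex_bij_betw[OF f])
    finally show ?thesis using trace_pow_schur[OF AJ es] by simp
  qed
  show ?thesis using les ev tr by blast
qed


lemma card_filter_sum: "finite T \<Longrightarrow> real (card {y\<in>T. P y}) = (\<Sum>y\<in>T. if P y then 1 else 0)"
  by (simp add: sum.inter_filter[symmetric])

lemma expander_mixing:
  fixes adj :: "'n::finite \<Rightarrow> 'n \<Rightarrow> bool" and S T :: "'n set"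
  assumes graph: "regular_graph adj d" and n2: "CARD('n) \<ge> 2"
  shows "real (card {(x,y). adj x y \<and> x \<in> S \<and> y \<in> T})
    \<le> real d * real (card S) * real (card T) / real CARD('n) + expansion adj * sqrt (real (card S) * real (card T))"
proof -
  let ?n = "CARD('n)"
  define a where "a = (\<lambda>x y. if adj x y then 1 else 0 :: real)"
  have sym: "\<And>u v. adj u v \<Longrightarrow> adj v u" using graph by (auto simp: regular_graph_def)
  have symA: "symm a" using sym by (auto simp: symm_def a_def)
  have rs: "(\<Sum>j\<in>UNIV. a i j) = real d" for i
  proof -
    have "(\<Sum>j\<in>UNIV. a i j) = real (card {j\<in>UNIV. adj i j})"
      unfolding a_def by (rule card_filter_sum[symmetric]) simp
    then show ?thesis using graph by (simp add: regular_graph_def)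
  qed
  have a0: "a i j \<ge> 0" for i j by (simp add: a_def)
  have "\<exists>es. length es = ?n \<and> adj_eigenvalues adj = sort es
            \<and> (\<forall>k. ftrace (fpow a k) = sum_list (map (\<lambda>e. e^k) es))"
    unfolding a_def by (rule spectral_bridge[of adj]) (rule sym)
  then obtain es where les: "length es = ?n" and ev: "adj_eigenvalues adj = sort es"
    and tr: "\<And>k. ftrace (fpow a k) = sum_list (map (\<lambda>e. e^k) es)"
    by blast
  define xs where "xs = sort es"
  define lam where "lam = expansion adj"
  have lam_def': "lam = max (xs ! (?n - 2)) \<bar>xs ! 0\<bar>"
    unfolding lam_def expansion_def ev xs_def ..
  have lam0: "lam \<ge> 0" unfolding lam_def' by simp
  have lxs: "length xs = ?n" using les by (simp add: xs_def)
  have sxs: "sorted xs" by (simp add: xs_def)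
  have set_xs: "set xs = set es" by (simp add: xs_def)
  have sum_sort: "sum_list (map g xs) = sum_list (map g es)" for g :: "real \<Rightarrow> real"
    unfolding xs_def by (simp only: sum_mset_sum_list[symmetric] mset_map mset_sort)
  have tr0: "ftrace (fpow a k) \<le> real ?n * real d ^ k" for k
  proof -
    have "ftrace (fpow a k) \<le> (\<Sum>x\<in>(UNIV::'n set). real d ^ k)"
      unfolding ftrace_def
    proof (rule ordered_comm_monoid_add_class.sum_mono)
      fix x :: 'n
      have "fpow a k x x \<le> (\<Sum>y\<in>UNIV. fpow a k x y)"
        by (rule member_le_sum) (simp_all add: nonneg_fpow a0)
      then show "fpow a k x x \<le> real d ^ k" using rowsum_fpow[OF rs] by simp
    qed
    then show ?thesis by simp
  qed
  have ebound: "\<bar>e\<bar> \<le> real d" if e: "e \<in> set es" for e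
  proof -
    have "e^2 \<le> (real d)^2"
    proof (rule pow2_lim[where C="real ?n"])
      show "e^2 \<ge> 0" "(real d)^2 \<ge> 0" by simp_all
      fix j :: nat
      have "(e^2)^(2^j) = e^(2*2^j)" by (simp add: power_mult)
      also have "\<dots> \<le> sum_list (map (\<lambda>e. e^(2*2^j)) es)"
        by (rule member_le_sum_list) (use e in \<open>auto simp: power_mult\<close>)
      also have "\<dots> = ftrace (fpow a (2*2^j))" by (rule tr[symmetric])
      also have "\<dots> \<le> real ?n * real d ^ (2*2^j)" by (rule tr0)
      also have "\<dots> = real ?n * ((real d)^2)^(2^j)" by (simp add: power_mult)
      finally show "(e^2)^(2^j) \<le> real ?n * ((real d)^2)^(2^j)" .
    qed
    then have "\<bar>e\<bar>^2 \<le> (real d)^2" by simp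
    then show ?thesis by (rule power2_le_imp_le) simp
  qed
  have trb: "ftrace (fpow a (2*m)) \<le> real d^(2*m) + (real ?n - 1) * lam^(2*m)" if m: "m \<ge> 1" for m
  proof -
    define g where "g e = e^(2*m)" for e :: real
    have geven: "g e = \<bar>e\<bar>^(2*m)" for e by (simp add: g_def power_even_abs)
    have "ftrace (fpow a (2*m)) = sum_list (map g xs)" unfolding tr sum_sort g_def ..
    also have "\<dots> = (\<Sum>i\<in>{0..<?n}. g (xs ! i))"
      by (simp add: sum_list_sum_nth lxs)
    also have "\<dots> = (\<Sum>i\<in>{0..<?n - 1}. g (xs ! i)) + g (xs ! (?n - 1))"
    proof -
      obtain k where k: "?n = Suc k" using n2 by (cases ?n) auto
      show ?thesis unfolding k by simp
    qed
    also have "\<dots> \<le> real (?n - 1) * lam^(2*m) + real d^(2*m)"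
    proof (rule add_mono)
      have "(\<Sum>i\<in>{0..<?n - 1}. g (xs ! i)) \<le> real (card {0..<?n - 1}) * lam^(2*m)"
      proof (rule sum_bounded_above)
        fix i assume i: "i \<in> {0..<?n - 1}"
        have lo: "xs ! 0 \<le> xs ! i" using i sxs lxs by (intro sorted_nth_mono) auto
        have hi: "xs ! i \<le> xs ! (?n - 2)" using i sxs lxs n2 by (intro sorted_nth_mono) auto
        have "\<bar>xs ! i\<bar> \<le> lam" unfolding lam_def' using lo hi by linarith
        then show "g (xs ! i) \<le> lam^(2*m)" unfolding geven by (rule power_mono) simp
      qed
      then show "(\<Sum>i\<in>{0..<?n - 1}. g (xs ! i)) \<le> real (?n - 1) * lam^(2*m)" by simp
      have "?n - 1 < length xs" using lxs n2 by simp
      then have "xs ! (?n - 1) \<in> set xs" by (rule nth_mem)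
      then have "xs ! (?n - 1) \<in> set es" using set_xs by simp
      then have "\<bar>xs ! (?n - 1)\<bar> \<le> real d" by (rule ebound)
      then show "g (xs ! (?n - 1)) \<le> real d^(2*m)" unfolding geven by (rule power_mono) simp
    qed
    also have "real (?n - 1) = real ?n - 1" using n2 by simp
    finally show ?thesis by simp
  qed
  have nb: "ip (act a y) (act a y) \<le> lam^2 * ip y y" if "(\<Sum>i\<in>UNIV. y i) = 0" for y
    by (rule norm_bound[OF symA rs trb lam0 that])
  have mix: "(\<Sum>x\<in>S. \<Sum>y\<in>T. a x y) \<le> real d * real (card S) * real (card T) / real ?n
            + lam * sqrt (real (card S) * real (card T))"
    by (rule mixing_f[OF symA rs nb lam0])
  have "{(x,y). adj x y \<and> x \<in> S \<and> y \<in> T} = Sigma S (\<lambda>x. {y\<in>T. adj x y})" by auto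
  then have "card {(x,y). adj x y \<and> x \<in> S \<and> y \<in> T} = (\<Sum>x\<in>S. card {y\<in>T. adj x y})"
    by (simp add: card_SigmaI)
  then have "real (card {(x,y). adj x y \<and> x \<in> S \<and> y \<in> T}) = (\<Sum>x\<in>S. \<Sum>y\<in>T. a x y)"
    by (simp add: card_filter_sum a_def)
  then show ?thesis using mix by (simp add: lam_def)
qed


lemma bit_UNIV: "(UNIV :: bit set) = {0, 1}"
proof -
  have "x \<in> {0, 1}" for x :: bit by (cases x) simp_all
  then show ?thesis by blast
qed

lemma finite_bit_UNIV: "finite (UNIV :: bit set)" by (simp add: bit_UNIV)

lemma card_bit_UNIV: "card (UNIV :: bit set) = 2" by (simp add: bit_UNIV)

lemma finite_bitvec: "finite (UNIV :: (bit^'d::finite) set)"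
proof -
  have "finite (PiE (UNIV :: 'd set) (\<lambda>_. UNIV :: bit set))"
    by (rule finite_PiE) (simp_all add: finite_bit_UNIV)
  moreover have "PiE (UNIV :: 'd set) (\<lambda>_. UNIV :: bit set) = UNIV" by (simp add: PiE_UNIV_domain)
  ultimately have fin: "finite (UNIV :: ('d \<Rightarrow> bit) set)" by simp
  have eq: "(UNIV :: (bit^'d) set) = vec_lambda ` (UNIV :: ('d \<Rightarrow> bit) set)"
    by (metis surj_def vec_lambda_eta)
  have "finite (vec_lambda ` (UNIV :: ('d \<Rightarrow> bit) set))" by (rule finite_imageI[OF fin])
  then show ?thesis unfolding eq .
qed

lemma finite_bitvec_set: "finite (A :: (bit^'d::finite) set)"
  using finite_bitvec[where 'd='d] by (rule finite_subset[rotated]) simp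

lemma finite_bitvec_sets: "finite (A :: (bit^'d::finite) set set)"
proof -
  have "finite (Pow (UNIV :: (bit^'d) set))" by (rule iffD2[OF finite_Pow_iff finite_bitvec[where 'd='d]])
  then show ?thesis by (rule finite_subset[rotated]) simp
qed

lemma nonzero_coord: "(c :: bit^'d) \<noteq> 0 \<Longrightarrow> \<exists>i. c $ i \<noteq> 0"
  by (metis Finite_Cartesian_Product.vec_eq_iff Finite_Cartesian_Product.zero_index)

lemma rel_distance_bounds:
  fixes C0 :: "(bit^'d::finite) set"
  assumes c: "c \<in> C0" "c \<noteq> 0"
  shows "0 < rel_distance C0 \<and> rel_distance C0 \<le> 1"
proof -
  let ?S = "{rel_weight c | c. c \<in> C0 \<and> c \<noteq> 0}"
  have fin: "finite ?S"
  proof -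
    have "?S \<subseteq> rel_weight ` (UNIV :: (bit^'d) set)" by blast
    moreover have "finite (rel_weight ` (UNIV :: (bit^'d) set))"
      using finite_bitvec[where 'd='d] by simp
    ultimately show ?thesis by (rule finite_subset)
  qed
  have ne: "?S \<noteq> {}" using c by blast
  have bnd: "0 < x \<and> x \<le> 1" if "x \<in> ?S" for x
  proof -
    obtain c' where c': "c' \<in> C0" "c' \<noteq> 0" "x = rel_weight c'" using \<open>x \<in> ?S\<close> by blast
    obtain i where i: "c' $ i \<noteq> 0" using nonzero_coord[OF c'(2)] by blast
    have "card {i. c' $ i \<noteq> 0} \<ge> 1"
      using i by (metis (mono_tags, lifting) One_nat_def Suc_leI card_gt_0_iff empty_iff finite mem_Collect_eq)
    moreover have "card {i. c' $ i \<noteq> 0} \<le> CARD('d)" by (rule card_mono) simp_all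
    ultimately show ?thesis using c'(3) by (simp add: rel_weight_def)
  qed
  have "rel_distance C0 \<in> ?S" unfolding rel_distance_def by (rule Min_in[OF fin ne])
  then show ?thesis using bnd by blast
qed

lemma dim_zero_sub:
  fixes V :: "(bit^'d::finite) set"
  assumes "V \<subseteq> {0}" shows "vec.dim V = 0"
proof -
  have "vec.dim V \<le> vec.dim ({0} :: (bit^'d) set)" by (rule vec.dim_subset[OF assms])
  also have "({0} :: (bit^'d) set) = vec.span {}" by simp
  also have "vec.dim (vec.span ({} :: (bit^'d) set)) = 0" by (simp add: vec.dim_span)
  finally show ?thesis by simp
qed

lemma gen_set_finite:
  fixes C0 :: "(bit^'d::finite) set"
  shows "finite {real (card {i. \<exists>v\<in>V. v $ i \<noteq> 0}) / real CARD('d)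
          | V. V \<subseteq> C0 \<and> vec.subspace V \<and> vec.dim V = r}"
proof -
  have "{real (card {i. \<exists>v\<in>V. v $ i \<noteq> 0}) / real CARD('d) | V. V \<subseteq> C0 \<and> vec.subspace V \<and> vec.dim V = r}
      = (\<lambda>V. real (card {i. \<exists>v\<in>V. v $ i \<noteq> 0}) / real CARD('d)) ` {V. V \<subseteq> C0 \<and> vec.subspace V \<and> vec.dim V = r}"
    by blast
  moreover have "finite ((\<lambda>V. real (card {i. \<exists>v\<in>V. v $ i \<noteq> 0}) / real CARD('d)) ` {V :: (bit^'d) set. V \<subseteq> C0 \<and> vec.subspace V \<and> vec.dim V = r})"
    by (rule finite_imageI[OF finite_bitvec_sets])
  ultimately show ?thesis by simp
qed

lemma gen_le:
  fixes C0 :: "(bit^'d::finite) set"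
  assumes "V \<subseteq> C0" "vec.subspace V" "vec.dim V = r"
  shows "gen_rel_distance C0 r \<le> real (card {i. \<exists>v\<in>V. v $ i \<noteq> 0}) / real CARD('d)"
  unfolding gen_rel_distance_def by (rule Min_le[OF gen_set_finite]) (use assms in blast)

lemma gen_pos:
  fixes C0 :: "(bit^'d::finite) set"
  assumes dimr: "\<exists>V. V \<subseteq> C0 \<and> vec.subspace V \<and> vec.dim V = r" and r: "r \<ge> 1"
  shows "gen_rel_distance C0 r > 0"
proof -
  let ?S = "{real (card {i. \<exists>v\<in>V. v $ i \<noteq> 0}) / real CARD('d) | V. V \<subseteq> C0 \<and> vec.subspace V \<and> vec.dim V = r}"
  have ne: "?S \<noteq> {}" using dimr by blast
  have pos: "x > 0" if "x \<in> ?S" for x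
  proof -
    obtain V where V: "V \<subseteq> C0" "vec.subspace V" "vec.dim V = r"
      and x: "x = real (card {i. \<exists>v\<in>V. v $ i \<noteq> 0}) / real CARD('d)" using \<open>x \<in> ?S\<close> by blast
    have "\<not> V \<subseteq> {0}"
    proof
      assume "V \<subseteq> {0}"
      then have "vec.dim V = 0" by (rule dim_zero_sub)
      with V(3) r show False by simp
    qed
    then obtain v where v: "v \<in> V" "v \<noteq> 0" by blast
    obtain i where i: "v $ i \<noteq> 0" using nonzero_coord[OF v(2)] by blast
    have "{i. \<exists>v\<in>V. v $ i \<noteq> 0} \<noteq> {}" using i v by blast
    then have "card {i. \<exists>v\<in>V. v $ i \<noteq> 0} > 0" by (simp add: card_gt_0_iff)
    then show ?thesis using x by simp
  qed
  show ?thesis unfolding gen_rel_distance_def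
    using Min_gr_iff[OF gen_set_finite ne] pos by blast
qed


lemma dim_bound:
  fixes C0 :: "(bit^'d::finite) set" and V :: "(bit^'d) set" and I :: "'d set"
  assumes sub: "vec.subspace V" and VC: "V \<subseteq> C0"
    and supp: "\<And>v i. v \<in> V \<Longrightarrow> i \<notin> I \<Longrightarrow> v $ i = 0"
    and cardI: "real (card I) \<le> gen_rel_distance C0 r * real CARD('d)"
  shows "vec.dim V \<le> r"
proof (rule ccontr)
  assume "\<not> vec.dim V \<le> r"
  then have dimV: "vec.dim V \<ge> Suc r" by simp
  have "\<not> V \<subseteq> {0}"
  proof
    assume "V \<subseteq> {0}"
    then have "vec.dim V = 0" by (rule dim_zero_sub)
    with dimV show False by simp
  qed
  then obtain v0 where v0: "v0 \<in> V" "v0 \<noteq> 0" by blast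
  obtain i0 where i0: "v0 $ i0 \<noteq> 0" using nonzero_coord[OF v0(2)] by blast
  then have i01: "v0 $ i0 = 1" by simp
  have i0I: "i0 \<in> I" using supp v0(1) i0 by blast
  define V' where "V' = {v \<in> V. v $ i0 = 0}"
  have subV': "vec.subspace V'"
    unfolding vec.subspace_def V'_def
    using vec.subspace_0[OF sub] vec.subspace_add[OF sub] vec.subspace_scale[OF sub] by auto
  have V'V: "V' \<subseteq> V" by (auto simp: V'_def)
  have VV': "V \<subseteq> vec.span (insert v0 V')"
  proof
    fix v assume v: "v \<in> V"
    define c where "c = v $ i0"
    define v' where "v' = v - c *s v0"
    have "v' \<in> V" unfolding v'_def by (rule vec.subspace_diff[OF sub v vec.subspace_scale[OF sub v0(1)]])
    moreover have "v' $ i0 = 0" by (simp add: v'_def c_def i01)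
    ultimately have v'V': "v' \<in> V'" by (simp add: V'_def)
    have "v' + c *s v0 \<in> vec.span (insert v0 V')"
      by (intro vec.span_add vec.span_scale vec.span_base) (simp_all add: v'V')
    moreover have "v' + c *s v0 = v" by (simp add: v'_def)
    ultimately show "v \<in> vec.span (insert v0 V')" by simp
  qed
  have "vec.dim V \<le> vec.dim (vec.span (insert v0 V'))" by (rule vec.dim_subset[OF VV'])
  also have "\<dots> = vec.dim (insert v0 V')" by (rule vec.dim_span)
  also have "\<dots> \<le> vec.dim V' + 1" by (simp add: vec.dim_insert)
  finally have dV': "r \<le> vec.dim V'" using dimV by simp
  obtain Bs where Bs: "Bs \<subseteq> V'" "vec.independent Bs" "V' \<subseteq> vec.span Bs" "card Bs = vec.dim V'"
    by (rule vec.basis_exists)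
  obtain T where T: "T \<subseteq> Bs" "card T = r" "finite T"
    using obtain_subset_with_card_n[of r Bs] dV' Bs(4) by auto
  define W where "W = vec.span T"
  have subW: "vec.subspace W" unfolding W_def by (rule vec.subspace_span)
  have WV': "W \<subseteq> V'" unfolding W_def using T(1) Bs(1) subV' by (intro vec.span_minimal) auto
  have dimW: "vec.dim W = r" unfolding W_def
    using vec.dim_span_eq_card_independent[OF vec.independent_mono[OF Bs(2) T(1)]] T(2) by simp
  have WC: "W \<subseteq> C0" using WV' V'V VC by blast
  have suppW: "{i. \<exists>v\<in>W. v $ i \<noteq> 0} \<subseteq> I - {i0}"
  proof
    fix i assume "i \<in> {i. \<exists>v\<in>W. v $ i \<noteq> 0}"
    then obtain v where v: "v \<in> W" "v $ i \<noteq> 0" by blast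
    then have "v \<in> V'" using WV' by blast
    then have "v \<in> V" "v $ i0 = 0" by (auto simp: V'_def)
    then show "i \<in> I - {i0}" using supp v(2) by blast
  qed
  have finI: "finite I" by simp
  have "card {i. \<exists>v\<in>W. v $ i \<noteq> 0} \<le> card (I - {i0})" by (rule card_mono[OF _ suppW]) simp
  also have "card (I - {i0}) = card I - 1" using i0I finI by simp
  finally have c0: "card {i. \<exists>v\<in>W. v $ i \<noteq> 0} \<le> card I - 1" .
  have cI: "card I \<ge> 1" using card_gt_0_iff[of I] i0I finI by auto
  then have "real (card I - 1) = real (card I) - 1" by (simp add: of_nat_diff)
  moreover have "real (card {i. \<exists>v\<in>W. v $ i \<noteq> 0}) \<le> real (card I - 1)" using c0 by (simp only: of_nat_le_iff)
  ultimately have c1: "real (card {i. \<exists>v\<in>W. v $ i \<noteq> 0}) \<le> real (card I) - 1" by simp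
  have "gen_rel_distance C0 r \<le> real (card {i. \<exists>v\<in>W. v $ i \<noteq> 0}) / real CARD('d)"
    by (rule gen_le[OF WC subW dimW])
  then have "gen_rel_distance C0 r * real CARD('d) \<le> real (card {i. \<exists>v\<in>W. v $ i \<noteq> 0})"
    by (simp add: pos_le_divide_eq)
  with c1 cardI show False by linarith
qed

lemma map2_self: "map2 (\<lambda>a g. a *s g) (map u gs) gs = map (\<lambda>g. u g *s g) gs"
  by (induction gs) auto

lemma gs_len:
  fixes C0 :: "(bit^'d::finite) set"
  assumes code: "linear_code C0" and param: "is_param (list_dec C0 w) bb gsl"
    and cardI: "real (card {i. w $ i = None}) \<le> gen_rel_distance C0 r * real CARD('d)"
  shows "length gsl \<le> r"
proof -
  let ?L = "list_dec C0 w"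
  have sub: "vec.subspace C0" using code by (simp add: linear_code_def)
  have dist: "distinct gsl" and ind: "vec.independent (set gsl)"
    and L: "?L = {bb + sum_list (map2 (\<lambda>a g. a *s g) xs gsl) | xs. length xs = length gsl}"
    using param by (auto simp: is_param_def)
  have inL: "bb + v \<in> ?L" if v: "v \<in> vec.span (set gsl)" for v
  proof -
    obtain u where u: "v = (\<Sum>g\<in>set gsl. u g *s g)" using v vec.span_finite[of "set gsl"] by auto
    have "sum_list (map2 (\<lambda>a g. a *s g) (map u gsl) gsl) = v"
      unfolding map2_self u by (rule sum_list_distinct_conv_sum_set[OF dist])
    then have "bb + v = bb + sum_list (map2 (\<lambda>a g. a *s g) (map u gsl) gsl)" by simp
    moreover have "length (map u gsl) = length gsl" by simp
    ultimately show ?thesis unfolding L by blast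
  qed
  have b0: "bb \<in> ?L" using inL[of 0] by (simp add: vec.span_zero)
  have LC: "?L \<subseteq> C0" by (auto simp: list_dec_def)
  have Lw: "c $ i = the (w $ i)" if "c \<in> ?L" "w $ i \<noteq> None" for c i
    using that by (auto simp: list_dec_def)
  define V where "V = vec.span (set gsl)"
  have subV: "vec.subspace V" unfolding V_def by (rule vec.subspace_span)
  have VC: "V \<subseteq> C0"
  proof
    fix v assume v: "v \<in> V"
    have "(bb + v) - bb \<in> C0"
      using vec.subspace_diff[OF sub] LC inL[OF v[unfolded V_def]] b0 by blast
    then show "v \<in> C0" by simp
  qed
  have supp: "v $ i = 0" if v: "v \<in> V" and i: "i \<notin> {i. w $ i = None}" for v i
  proof -
    have A: "(bb + v) $ i = the (w $ i)" using Lw[OF inL[OF v[unfolded V_def]]] i by blast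
    have B: "bb $ i = the (w $ i)" using Lw[OF b0] i by blast
    have e: "(bb + v) $ i = bb $ i" by (simp only: A B)
    have "v $ i = (bb + v) $ i - bb $ i" by (simp only: vector_add_component add_diff_cancel_left')
    also have "\<dots> = 0" by (simp only: e diff_self)
    finally show ?thesis .
  qed
  have "vec.dim V \<le> r" by (rule dim_bound[OF subV VC supp cardI])
  moreover have "vec.dim V = length gsl"
    unfolding V_def vec.dim_span_eq_card_independent[OF ind] using dist by (simp add: distinct_card)
  ultimately show ?thesis by simp
qed


lemma dc_edge_eq:
  "dc_edge (s,x) u = dc_edge (s',y) u' \<longleftrightarrow> (s' = s \<and> y = x \<and> u' = u) \<or> (s' \<noteq> s \<and> y = u \<and> u' = x)"
  by (cases s; cases s') (auto simp: dc_edge_def)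

lemma dc_edge_inj: "dc_edge v u = dc_edge v u' \<Longrightarrow> u = u'"
  by (cases v) (auto simp: dc_edge_eq)

lemma incident_iff:
  "dc_edge (s,x) u \<in> incident adj w \<longleftrightarrow> (w = (s,x) \<and> adj x u) \<or> (w = (\<not>s,u) \<and> adj u x)"
proof (cases w)
  case (Pair s' y)
  have "dc_edge (s,x) u \<in> incident adj w \<longleftrightarrow> (\<exists>u'. adj y u' \<and> dc_edge (s,x) u = dc_edge (s',y) u')"
    by (auto simp: incident_def Pair)
  also have "\<dots> \<longleftrightarrow> (w = (s,x) \<and> adj x u) \<or> (w = (\<not>s,u) \<and> adj u x)"
    unfolding dc_edge_eq Pair by (cases s; cases s') auto
  finally show ?thesis .
qed

lemma dc_edges_mem:
  assumes sym: "\<And>u v. adj u v \<Longrightarrow> adj v u"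
  shows "dc_edge (s,x) u \<in> dc_edges adj \<longleftrightarrow> adj x u"
  using sym by (cases s) (auto simp: dc_edge_def dc_edges_def)

definition rowv :: "(bool \<times> 'n \<Rightarrow> (bit^'d) list) \<Rightarrow> bool \<times> 'n \<Rightarrow> 'd \<Rightarrow> bit list" where
  "rowv gs w i = map (\<lambda>g. g $ i) (gs w)"

lemma fhe_invariant:
  fixes adj :: "'n::finite \<Rightarrow> 'n \<Rightarrow> bool" and Gam :: "bool \<times> 'n \<Rightarrow> 'd::finite \<Rightarrow> 'n"
    and gs :: "bool \<times> 'n \<Rightarrow> (bit^'d) list"
  assumes order: "\<forall>v. bij_betw (Gam v) UNIV {u. adj (snd v) u}"
    and run: "(fhe_step adj thr gs Gam)\<^sup>*\<^sup>* E0 E1"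
    and E0: "E0 = dc_edges adj - (\<Union>v\<in>B. incident adj v)"
  shows "\<exists>D P. E1 \<subseteq> E0 \<and> E0 - E1 \<subseteq> (\<Union>w. D w) \<and> (\<forall>w. D w \<subseteq> incident adj w)
     \<and> (\<forall>w. P w \<subseteq> range (rowv gs w)) \<and> (\<forall>w. real (card (D w)) \<le> real (card (P w)) * thr)
     \<and> (\<forall>w i. rowv gs w i \<in> P w \<longrightarrow> dc_edge w (Gam w i) \<notin> E1) \<and> (\<forall>w. P w \<noteq> {} \<longrightarrow> w \<notin> B)"
  using run
proof (induction rule: rtranclp_induct)
  case base
  show ?case
    by (rule exI[where x="\<lambda>_. {}"], rule exI[where x="\<lambda>_. {}"]) auto
next
  case (step E1 E2)
  from step.IH obtain D P where
    I1: "E1 \<subseteq> E0" and I2: "E0 - E1 \<subseteq> (\<Union>w. D w)" and I3: "\<forall>w. D w \<subseteq> incident adj w"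
    and I4: "\<forall>w. P w \<subseteq> range (rowv gs w)" and I5: "\<forall>w. real (card (D w)) \<le> real (card (P w)) * thr"
    and I6: "\<forall>w i. rowv gs w i \<in> P w \<longrightarrow> dc_edge w (Gam w i) \<notin> E1" and I7: "\<forall>w. P w \<noteq> {} \<longrightarrow> w \<notin> B"
    by blast
  from step.hyps(2) obtain v e where e1: "e \<in> E1" and einc: "e \<in> incident adj v"
    and Rc: "real (card {e' \<in> E1. local_equiv gs Gam v e e'}) \<le> thr"
    and E2: "E2 = E1 - {e' \<in> E1. local_equiv gs Gam v e e'}"
    unfolding fhe_step_def by blast
  define R where "R = {e' \<in> E1. local_equiv gs Gam v e e'}"
  from einc obtain u where u: "adj (snd v) u" "e = dc_edge v u" by (auto simp: incident_def)
  have bij: "bij_betw (Gam v) UNIV {u. adj (snd v) u}" using order by blast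
  then have injG: "inj (Gam v)" by (simp add: bij_betw_def)
  have "u \<in> range (Gam v)" using bij u(1) by (auto simp: bij_betw_def)
  then obtain i where i: "Gam v i = u" by blast
  define \<rho> where "\<rho> = rowv gs v i"
  have Rchar: "e' \<in> R \<longleftrightarrow> e' \<in> E1 \<and> (\<exists>j. e' = dc_edge v (Gam v j) \<and> rowv gs v j = \<rho>)" for e'
  proof -
    have "local_equiv gs Gam v e e' \<longleftrightarrow> (\<exists>j. e' = dc_edge v (Gam v j) \<and> rowv gs v j = \<rho>)"
    proof
      assume "local_equiv gs Gam v e e'"
      then obtain i' j where ij: "e = dc_edge v (Gam v i')" "e' = dc_edge v (Gam v j)"
        "map (\<lambda>g. g $ i') (gs v) = map (\<lambda>g. g $ j) (gs v)" unfolding local_equiv_def by blast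
      have "Gam v i' = Gam v i" using ij(1) u(2) i dc_edge_inj by metis
      then have "i' = i" using injG by (simp add: inj_eq)
      then show "\<exists>j. e' = dc_edge v (Gam v j) \<and> rowv gs v j = \<rho>"
        using ij by (auto simp: rowv_def \<rho>_def)
    next
      assume "\<exists>j. e' = dc_edge v (Gam v j) \<and> rowv gs v j = \<rho>"
      then obtain j where j: "e' = dc_edge v (Gam v j)" "rowv gs v j = \<rho>" by blast
      have m: "map (\<lambda>g. g $ i) (gs v) = map (\<lambda>g. g $ j) (gs v)" using j(2) by (simp add: rowv_def \<rho>_def)
      have ee: "e = dc_edge v (Gam v i)" using u(2) i by simp
      show "local_equiv gs Gam v e e'"
        unfolding local_equiv_def using ee j(1) m by blast
    qed
    then show ?thesis unfolding R_def by blast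
  qed
  have E2R: "E2 = E1 - R" using E2 R_def by simp
  have rho_notin: "\<rho> \<notin> P v"
  proof
    assume "\<rho> \<in> P v"
    then have "dc_edge v (Gam v i) \<notin> E1" using I6 \<rho>_def by blast
    then show False using e1 u(2) i by simp
  qed
  have vB: "v \<notin> B" using e1 I1 E0 einc by blast
  have RE1: "R \<subseteq> E1" using Rchar by blast
  have Rinc: "R \<subseteq> incident adj v"
  proof
    fix e' assume "e' \<in> R"
    then obtain j where j: "e' = dc_edge v (Gam v j)" using Rchar by blast
    have "adj (snd v) (Gam v j)" using bij by (auto simp: bij_betw_def)
    then show "e' \<in> incident adj v" using j by (auto simp: incident_def)
  qed
  define D' where "D' = D(v := D v \<union> R)"
  define P' where "P' = P(v := insert \<rho> (P v))"
  have finP: "finite (P w)" for w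
  proof (rule finite_subset)
    show "P w \<subseteq> range (rowv gs w)" using I4 by blast
  qed simp
  show ?case
  proof (rule exI[where x=D'], rule exI[where x=P'], intro conjI allI impI)
    show "E2 \<subseteq> E0" using I1 E2R by blast
    show "E0 - E2 \<subseteq> (\<Union>w. D' w)"
    proof
      fix x assume x: "x \<in> E0 - E2"
      show "x \<in> (\<Union>w. D' w)"
      proof (cases "x \<in> E1")
        case True
        then have "x \<in> R" using x E2R by blast
        then have "x \<in> D' v" unfolding D'_def by auto
        then show ?thesis by blast
      next
        case False
        then obtain w where "x \<in> D w" using x I2 by blast
        then have "x \<in> D' w" unfolding D'_def by auto
        then show ?thesis by blast
      qed
    qed
    fix w
    show "D' w \<subseteq> incident adj w"
    proof (cases "w = v")
      case True
      then show ?thesis using spec[OF I3, of v] Rinc by (simp add: D'_def)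
    next
      case False
      then show ?thesis using spec[OF I3, of w] by (simp add: D'_def)
    qed
    show "P' w \<subseteq> range (rowv gs w)"
    proof (cases "w = v")
      case True
      then show ?thesis using spec[OF I4, of v] by (auto simp: P'_def \<rho>_def)
    next
      case False
      then show ?thesis using spec[OF I4, of w] by (simp add: P'_def)
    qed
    show "real (card (D' w)) \<le> real (card (P' w)) * thr"
    proof (cases "w = v")
      case True
      have "card (D v \<union> R) \<le> card (D v) + card R" by (rule card_Un_le)
      then have "real (card (D v \<union> R)) \<le> real (card (D v)) + real (card R)" by linarith
      also have "\<dots> \<le> real (card (P v)) * thr + thr" using spec[OF I5, of v] Rc R_def by (simp add: add_mono)
      also have "\<dots> = real (card (insert \<rho> (P v))) * thr"
        using rho_notin finP[of v] by (simp add: algebra_simps)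
      finally show ?thesis using True by (simp add: D'_def P'_def)
    next
      case False
      then show ?thesis using spec[OF I5, of w] by (simp add: D'_def P'_def)
    qed
  next
    fix w i assume wi: "rowv gs w i \<in> P' w"
    show "dc_edge w (Gam w i) \<notin> E2"
    proof (cases "w = v \<and> rowv gs w i = \<rho>")
      case True
      then have "dc_edge w (Gam w i) \<notin> E1 \<or> dc_edge w (Gam w i) \<in> R" using Rchar by blast
      then show ?thesis using E2R by blast
    next
      case False
      then have "rowv gs w i \<in> P w" using wi by (cases "w = v") (simp_all add: P'_def)
      then show ?thesis using I6 E2R by blast
    qed
  next
    fix w assume "P' w \<noteq> {}"
    then show "w \<notin> B" using spec[OF I7, of w] vB by (cases "w = v") (simp_all add: P'_def)
  qed
qed

lemma card_rows:
  fixes gs :: "bool \<times> 'n \<Rightarrow> (bit^'d::finite) list"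
  shows "card (range (rowv gs w)) \<le> 2 ^ length (gs w)"
proof -
  have "range (rowv gs w) \<subseteq> {xs. set xs \<subseteq> UNIV \<and> length xs = length (gs w)}"
    by (auto simp: rowv_def)
  moreover have "card {xs. set xs \<subseteq> (UNIV :: bit set) \<and> length xs = length (gs w)} = 2 ^ length (gs w)"
    using card_lists_length_eq[OF finite_bit_UNIV] card_bit_UNIV by simp
  moreover have "finite {xs. set xs \<subseteq> (UNIV :: bit set) \<and> length xs = length (gs w)}"
    using finite_lists_length_eq[OF finite_bit_UNIV] by simp
  ultimately show ?thesis using card_mono[of "{xs. set xs \<subseteq> (UNIV :: bit set) \<and> length xs = length (gs w)}" "range (rowv gs w)"] by simp
qed

lemma removal_bound:
  fixes adj :: "'n::finite \<Rightarrow> 'n \<Rightarrow> bool" and Gam :: "bool \<times> 'n \<Rightarrow> 'd::finite \<Rightarrow> 'n"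
    and gs :: "bool \<times> 'n \<Rightarrow> (bit^'d) list"
  assumes order: "\<forall>v. bij_betw (Gam v) UNIV {u. adj (snd v) u}"
    and run: "(fhe_step adj thr gs Gam)\<^sup>*\<^sup>* E0 E1"
    and E0: "E0 = dc_edges adj - (\<Union>v\<in>B. incident adj v)"
    and thr: "thr \<ge> 0"
    and len: "\<And>w. w \<notin> B \<Longrightarrow> length (gs w) \<le> r"
  shows "\<exists>D. E1 \<subseteq> E0 \<and> E0 - E1 \<subseteq> (\<Union>w. D w) \<and> (\<forall>w. D w \<subseteq> incident adj w)
     \<and> (\<forall>w. real (card (D w)) \<le> 2 ^ r * thr)"
proof -
  obtain D P where I1: "E1 \<subseteq> E0" and I2: "E0 - E1 \<subseteq> (\<Union>w. D w)" and I3: "\<forall>w. D w \<subseteq> incident adj w"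
    and I4: "\<forall>w. P w \<subseteq> range (rowv gs w)" and I5: "\<forall>w. real (card (D w)) \<le> real (card (P w)) * thr"
    and I7: "\<forall>w. P w \<noteq> {} \<longrightarrow> w \<notin> B"
    using fhe_invariant[OF order run E0] by blast
  have "real (card (D w)) \<le> 2 ^ r * thr" for w
  proof (cases "P w = {}")
    case True
    have "real (card (D w)) \<le> 0" using spec[OF I5, of w] True by simp
    moreover have "0 \<le> (2::real) ^ r * thr" using thr by simp
    ultimately show ?thesis by linarith
  next
    case False
    then have wB: "w \<notin> B" using I7 by blast
    have "card (P w) \<le> card (range (rowv gs w))" using spec[OF I4, of w] by (intro card_mono) simp_all
    also have "\<dots> \<le> 2 ^ length (gs w)" by (rule card_rows)
    also have "\<dots> \<le> 2 ^ r" using len[OF wB] by (simp add: power_increasing)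
    finally have c: "card (P w) \<le> 2 ^ r" .
    have "real (card (P w)) \<le> real ((2::nat) ^ r)" using c by (simp only: of_nat_le_iff)
    then have "real (card (P w)) \<le> 2 ^ r" by simp
    then have "real (card (P w)) * thr \<le> 2 ^ r * thr" using thr by (rule mult_right_mono)
    then show ?thesis using I5 by (meson order_trans)
  qed
  then show ?thesis using I1 I2 I3 by blast
qed


lemma arith1:
  fixes s b n d del eps lam K E :: real
  assumes h1: "s * (del * d) \<le> E + s * K + n * K"
    and h2: "E \<le> d * s * b / n + lam * sqrt (s * b)"
    and b0: "0 \<le> b" and bb: "b \<le> (1 - eps) * del * n"
    and s0: "0 \<le> s" and sn: "s \<le> n" and n0: "0 < n" and d0: "0 < d"
    and del0: "0 < del" and del1: "del \<le> 1" and eps0: "0 < eps" and eps1: "eps \<le> 1"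
    and lam0: "0 \<le> lam" and lam1: "lam \<le> d * eps^2 * del^2 / 32"
    and K: "K = eps^2 * del^2 * d / 8"
  shows "s \<le> eps * del * n / 2"
proof -
  define t where "t = eps * del"
  have t0: "0 < t" and t1: "t \<le> 1" using eps0 eps1 del0 del1 by (auto simp: t_def mult_le_one)
  have bn: "b \<le> n"
  proof -
    have "(1 - eps) * del \<le> 1" using eps0 eps1 del0 del1 by (simp add: mult_le_one)
    then have "(1 - eps) * del * n \<le> n" using n0 by (simp add: mult_le_cancel_right1)
    then show ?thesis using bb by linarith
  qed
  have hA: "d * s * b / n \<le> d * s * ((1 - eps) * del)"
  proof -
    have "b / n \<le> (1 - eps) * del" using bb n0 by (simp add: divide_le_eq mult.commute mult.left_commute)
    then have "(d * s) * (b / n) \<le> (d * s) * ((1 - eps) * del)"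
      using d0 s0 by (intro mult_left_mono) auto
    then show ?thesis by simp
  qed
  have hB: "sqrt (s * b) \<le> n"
  proof -
    have "s * b \<le> n * n" using s0 b0 sn bn by (intro mult_mono) auto
    then have "sqrt (s * b) \<le> sqrt (n * n)" by (rule real_sqrt_le_mono)
    then show ?thesis using n0 by simp
  qed
  have hC: "lam * sqrt (s * b) \<le> (d * eps^2 * del^2 / 32) * n"
    using lam0 lam1 hB s0 b0 by (intro mult_mono) auto
  have main: "s * (del * d) \<le> d * s * ((1 - eps) * del) + (d * eps^2 * del^2 / 32) * n
      + s * (eps^2 * del^2 * d / 8) + n * (eps^2 * del^2 * d / 8)"
    using h1[unfolded K] h2 hA hC by linarith
  have "d * (s * t) \<le> d * (t * t * (5 * n / 32 + s / 8))"
    using main by (simp add: t_def power2_eq_square algebra_simps)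
  then have "s * t \<le> t * t * (5 * n / 32 + s / 8)" using d0 by simp
  then have "s \<le> t * (5 * n / 32 + s / 8)" using t0 by (simp add: mult.commute mult.left_commute)
  also have "\<dots> = t * (5 * n / 32) + t * (s / 8)" by (simp add: algebra_simps)
  also have "t * (s / 8) \<le> s / 8" using mult_right_mono[OF t1, of "s/8"] s0 by simp
  finally have "s \<le> t * (5 * n / 32) + s / 8" by simp
  then have "s \<le> t * n * (5 / 28)" by (simp add: algebra_simps)
  also have "\<dots> \<le> t * n / 2" using t0 n0 by simp
  finally show ?thesis by (simp add: t_def)
qed

lemma lin_aux:
  fixes e A L1 L2 B C R Y H L3 M N :: real
  assumes "e \<le> A + L1" "L1 \<le> L2" "A = B" "B \<le> C" "R = Y" "Y = C + H" "L3 \<le> L2"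
    "2 * L2 \<le> 2 * M" "M \<le> N" "2 * N \<le> H"
  shows "e \<le> R - L3"
  using assms by linarith

lemma arith2:
  fixes e a b n d del eps lam :: real
  assumes h: "e \<le> d * a * b / n + lam * sqrt (a * b)"
    and a0: "0 \<le> a" and b0: "0 \<le> b" and an: "a \<le> (1 - eps/2) * del * n" and bn: "b \<le> (1 - eps/2) * del * n"
    and n0: "0 < n" and d0: "0 < d"
    and del0: "0 < del" and del1: "del \<le> 1" and eps0: "0 < eps" and eps1: "eps \<le> 1"
    and lam0: "0 \<le> lam" and lam1: "lam \<le> d * eps^2 * del^2 / 32"
  shows "e \<le> (1 - eps/4) * (del - lam / d) * del * n * d"
proof -
  define be where "be = (1 - eps/2) * del"
  have be0: "0 \<le> be" and bed: "be \<le> del" using eps1 eps0 del0 by (auto simp: be_def)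
  have ab: "a * b \<le> (be * n) * (be * n)" using a0 b0 an bn by (intro mult_mono) (auto simp: be_def)
  have hA: "d * a * b / n \<le> d * be * be * n"
  proof -
    have "d * (a * b) \<le> d * ((be * n) * (be * n))" using ab d0 by (intro mult_left_mono) auto
    then have "d * (a * b) / n \<le> d * ((be * n) * (be * n)) / n" using n0 by (intro divide_right_mono) auto
    then show ?thesis using n0 by (simp add: algebra_simps)
  qed
  have hB: "sqrt (a * b) \<le> be * n"
  proof -
    have "sqrt (a * b) \<le> sqrt ((be * n) * (be * n))" using ab by (rule real_sqrt_le_mono)
    then show ?thesis using be0 n0 by simp
  qed
  have hC: "lam * sqrt (a * b) \<le> lam * (be * n)" using hB lam0 by (rule mult_left_mono)
  have e1: "e \<le> d * be * be * n + lam * be * n" using h hA hC by (simp add: algebra_simps)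
  have q: "(del - lam / d) * d = del * d - lam" using d0 by (simp add: field_simps)
  have rhs0: "(1 - eps/4) * (del - lam / d) * del * n * d = (1 - eps/4) * del * n * ((del - lam / d) * d)"
    by (simp add: mult.commute mult.left_commute mult.assoc)
  have rhs: "(1 - eps/4) * (del - lam / d) * del * n * d = (1 - eps/4) * del * del * n * d - (1 - eps/4) * lam * del * n"
    unfolding rhs0 q by (simp add: field_simps)
  have k1: "lam * be * n \<le> lam * del * n" using lam0 bed n0 by (simp add: mult_right_mono mult_left_mono)
  have k2: "(1 - eps/4) * lam * del * n \<le> lam * del * n"
  proof -
    have X0: "0 \<le> lam * del * n" using lam0 del0 n0 by simp
    have "(1 - eps/4) * (lam * del * n) \<le> 1 * (lam * del * n)"
      using X0 eps0 by (intro mult_right_mono) auto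
    then show ?thesis by (simp add: mult.assoc)
  qed
  have k3: "2 * (lam * del * n) \<le> 2 * ((d * eps^2 * del^2 / 32) * del * n)"
  proof -
    have "lam * (del * n) \<le> (d * eps^2 * del^2 / 32) * (del * n)"
      using lam1 del0 n0 by (intro mult_right_mono) auto
    then have "lam * del * n \<le> (d * eps^2 * del^2 / 32) * del * n" by (simp only: mult.assoc)
    then show ?thesis by linarith
  qed
  have k4: "(d * eps^2 * del^2 / 32) * del * n \<le> (d * del * del * n) * (eps / 32)"
  proof -
    have "eps * del \<le> 1" using eps0 eps1 del0 del1 by (simp add: mult_le_one)
    then have "eps * (eps * del) \<le> eps" using eps0 by (simp add: mult_le_cancel_left1)
    then have "(d * del * del * n / 32) * (eps * (eps * del)) \<le> (d * del * del * n / 32) * eps"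
      using d0 del0 n0 by (intro mult_left_mono) auto
    then show ?thesis by (simp add: power2_eq_square algebra_simps)
  qed
  have k5: "d * be * be * n = (d * del * del * n) * (1 - eps + eps^2/4)"
    by (simp add: be_def power2_eq_square field_simps)
  have k6: "eps^2/4 \<le> eps/4" using eps0 eps1 by (simp add: power2_eq_square mult_le_cancel_left1)
  have P0: "0 \<le> d * del * del * n" using d0 del0 n0 by simp
  have k7: "(d * del * del * n) * (1 - eps + eps^2/4) \<le> (d * del * del * n) * (1 - 3 * eps / 4)"
    using k6 P0 by (intro mult_left_mono) auto
  have k8: "(1 - eps/4) * del * del * n * d = (d * del * del * n) * (1 - eps / 4)" by (simp add: algebra_simps)
  have k9: "2 * ((d * del * del * n) * (eps / 32)) \<le> (d * del * del * n) * (eps / 2)"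
  proof -
    have "(d * del * del * n) * (eps / 16) \<le> (d * del * del * n) * (eps / 2)"
      using P0 eps0 by (intro mult_left_mono) auto
    moreover have "2 * ((d * del * del * n) * (eps / 32)) = (d * del * del * n) * (eps / 16)" by simp
    ultimately show ?thesis by linarith
  qed
  have k10: "(d * del * del * n) * (1 - eps / 4) = (d * del * del * n) * (1 - 3 * eps / 4) + (d * del * del * n) * (eps / 2)"
    by (simp add: field_simps)
  show ?thesis unfolding rhs
    by (rule lin_aux[OF e1 k1 k5 k7 k8 k10 k2 k3 k4 k9])
qed


lemma card_side:
  fixes F :: "'n::finite \<Rightarrow> 'n set"
  shows "card (\<Union>x\<in>X. dc_edge (s,x) ` F x) = (\<Sum>x\<in>X. card (F x))"
proof -
  have "card (\<Union>x\<in>X. dc_edge (s,x) ` F x) = (\<Sum>x\<in>X. card (dc_edge (s,x) ` F x))"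
    by (rule card_UN_disjoint) (auto simp: dc_edge_eq)
  also have "\<dots> = (\<Sum>x\<in>X. card (F x))"
  proof (rule sum.cong[OF refl])
    fix x
    have "inj_on (dc_edge (s,x)) (F x)" by (rule inj_onI) (rule dc_edge_inj)
    then show "card (dc_edge (s,x) ` F x) = card (F x)" by (rule card_image)
  qed
  finally show ?thesis .
qed

lemma bad_side_bound:
  fixes adj :: "'n::finite \<Rightarrow> 'n \<Rightarrow> bool"
  assumes sym: "\<And>u v. adj u v \<Longrightarrow> adj v u" and tr0: "tr > 0"
    and eras: "real (card {e \<in> dc_edges adj. z e = None}) \<le> (1 - eps) * del * tr * real CARD('n)"
  shows "real (card {x. (t,x) \<in> bad_set adj tr z}) \<le> (1 - eps) * del * real CARD('n)"
proof -
  let ?Bt = "{x. (t,x) \<in> bad_set adj tr z}"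
  define F where "F x = {u. adj x u \<and> z (dc_edge (t,x) u) = None}" for x
  have big: "tr \<le> real (card (F x))" if "x \<in> ?Bt" for x
    using that by (simp add: bad_set_def F_def)
  have sub: "(\<Union>x\<in>?Bt. dc_edge (t,x) ` F x) \<subseteq> {e \<in> dc_edges adj. z e = None}"
    using dc_edges_mem[where adj=adj, OF sym] by (auto simp: F_def)
  have "real (card ?Bt) * tr \<le> (\<Sum>x\<in>?Bt. real (card (F x)))"
    using big by (rule sum_bounded_below)
  also have "\<dots> = real (card (\<Union>x\<in>?Bt. dc_edge (t,x) ` F x))" by (simp add: card_side)
  also have "\<dots> \<le> real (card {e \<in> dc_edges adj. z e = None})"
    using card_mono[OF _ sub] by simp
  also have "\<dots> \<le> ((1 - eps) * del * real CARD('n)) * tr" using eras by (simp add: algebra_simps)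
  finally show ?thesis using tr0 by simp
qed

lemma side_bound:
  fixes adj :: "'n::finite \<Rightarrow> 'n \<Rightarrow> bool" and s :: bool and E0 E' :: "('n \<times> 'n) set"
    and D :: "bool \<times> 'n \<Rightarrow> ('n \<times> 'n) set"
  assumes sym: "\<And>u v. adj u v \<Longrightarrow> adj v u" and reg: "regular_graph adj d" and n2: "CARD('n) \<ge> 2"
    and E0: "E0 = dc_edges adj - (\<Union>v\<in>B. incident adj v)"
    and cover: "E0 - E' \<subseteq> (\<Union>w. D w)" and Dinc: "\<And>w. D w \<subseteq> incident adj w"
    and Dcard: "\<And>w. real (card (D w)) \<le> K"
    and Bdef: "B = bad_set adj tr z" and tr0: "tr > 0"
    and eras: "real (card {e \<in> dc_edges adj. z e = None}) \<le> (1 - eps) * del * tr * real CARD('n)"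
    and d0: "d > 0" and del0: "0 < del" and del1: "del \<le> 1" and eps0: "0 < eps" and eps1: "eps \<le> 1"
    and K: "K = eps^2 * del^2 * real d / 8"
    and lam0: "0 \<le> expansion adj" and lam1: "expansion adj \<le> real d * eps^2 * del^2 / 32"
  shows "real (card {x. del * real d < real (card {u. adj x u \<and> dc_edge (s,x) u \<notin> E'})})
           \<le> (1 - eps/2) * del * real CARD('n)"
proof -
  define n where "n = real CARD('n)"
  have n0: "n > 0" by (simp add: n_def)
  define Bs where "Bs = {x. (s,x) \<in> B}"
  define Bo where "Bo = {y. (\<not>s,y) \<in> B}"
  define rem where "rem x = {u. adj x u \<and> dc_edge (s,x) u \<notin> E'}" for x
  define Bp where "Bp = {x. del * real d < real (card (rem x))}"
  define S where "S = Bp - Bs"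
  have hBs: "real (card Bs) \<le> (1 - eps) * del * n"
    unfolding Bs_def Bdef n_def by (rule bad_side_bound[where adj=adj, OF sym tr0 eras])
  have hBo: "real (card Bo) \<le> (1 - eps) * del * n"
    unfolding Bo_def Bdef n_def by (rule bad_side_bound[where adj=adj, OF sym tr0 eras])
  define c1 where "c1 x = {u. adj x u \<and> u \<in> Bo}" for x
  define c2 where "c2 x = {u. dc_edge (s,x) u \<in> D (s,x)}" for x
  define c3 where "c3 x = {u. adj x u \<and> dc_edge (s,x) u \<in> D (\<not>s,u)}" for x
  have remsub: "rem x \<subseteq> c1 x \<union> c2 x \<union> c3 x" if xS: "x \<in> S" for x
  proof
    fix u assume "u \<in> rem x"
    then have a: "adj x u" and nE: "dc_edge (s,x) u \<notin> E'" by (auto simp: rem_def)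
    have ed: "dc_edge (s,x) u \<in> dc_edges adj" using dc_edges_mem[where adj=adj, OF sym] a by simp
    show "u \<in> c1 x \<union> c2 x \<union> c3 x"
    proof (cases "dc_edge (s,x) u \<in> E0")
      case True
      then obtain w where w: "dc_edge (s,x) u \<in> D w" using cover nE by blast
      then have "dc_edge (s,x) u \<in> incident adj w" using Dinc by blast
      then have "w = (s,x) \<or> w = (\<not>s,u)" by (simp add: incident_iff) blast
      then show ?thesis using w a by (auto simp: c2_def c3_def)
    next
      case False
      then obtain w where wB: "w \<in> B" and wi: "dc_edge (s,x) u \<in> incident adj w" using E0 ed by blast
      then have "w = (s,x) \<or> w = (\<not>s,u)" by (simp add: incident_iff) blast
      moreover have "(s,x) \<notin> B" using xS by (simp add: S_def Bs_def)
      ultimately have "(\<not>s,u) \<in> B" using wB by blast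
      then show ?thesis using a by (simp add: c1_def Bo_def)
    qed
  qed
  have cardrem: "real (card (rem x)) \<le> real (card (c1 x)) + real (card (c2 x)) + real (card (c3 x))" if "x \<in> S" for x
  proof -
    have "card (rem x) \<le> card (c1 x \<union> c2 x \<union> c3 x)" by (rule card_mono[OF _ remsub[OF that]]) simp
    also have "\<dots> \<le> card (c1 x \<union> c2 x) + card (c3 x)" by (rule card_Un_le)
    also have "\<dots> \<le> card (c1 x) + card (c2 x) + card (c3 x)" using card_Un_le[of "c1 x" "c2 x"] by simp
    finally show ?thesis by linarith
  qed
  have c2K: "real (card (c2 x)) \<le> K" for x
  proof -
    have "card (c2 x) \<le> card (D (s,x))"
    proof (rule card_inj_on_le)
      show "inj_on (dc_edge (s,x)) (c2 x)" by (rule inj_onI) (rule dc_edge_inj)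
      show "dc_edge (s,x) ` c2 x \<subseteq> D (s,x)" by (auto simp: c2_def)
    qed simp
    then show ?thesis using Dcard[of "(s,x)"] by linarith
  qed
  have sum1: "(\<Sum>x\<in>S. real (card (c1 x))) = real (card {(x,y). adj x y \<and> x \<in> S \<and> y \<in> Bo})"
  proof -
    have "{(x,y). adj x y \<and> x \<in> S \<and> y \<in> Bo} = Sigma S c1" by (auto simp: c1_def)
    then have "card {(x,y). adj x y \<and> x \<in> S \<and> y \<in> Bo} = (\<Sum>x\<in>S. card (c1 x))" by (simp add: card_SigmaI)
    then show ?thesis by simp
  qed
  have sum3: "(\<Sum>x\<in>S. real (card (c3 x))) \<le> n * K"
  proof -
    have "(\<Sum>x\<in>S. card (c3 x)) = card (\<Union>x\<in>S. dc_edge (s,x) ` c3 x)" by (rule card_side[symmetric])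
    also have "\<dots> \<le> card (\<Union>u. D (\<not>s,u))"
      by (rule card_mono) (auto simp: c3_def)
    also have "\<dots> \<le> (\<Sum>u\<in>UNIV. card (D (\<not>s,u)))" by (rule card_UN_le) simp
    finally have "real (\<Sum>x\<in>S. card (c3 x)) \<le> real (\<Sum>u\<in>UNIV. card (D (\<not>s,u)))" by (simp only: of_nat_le_iff)
    also have "\<dots> = (\<Sum>u\<in>UNIV. real (card (D (\<not>s,u))))" by simp
    also have "\<dots> \<le> (\<Sum>u\<in>(UNIV::'n set). K)" by (rule sum_mono) (rule Dcard)
    also have "\<dots> = n * K" by (simp add: n_def)
    finally show ?thesis by simp
  qed
  define E where "E = real (card {(x,y). adj x y \<and> x \<in> S \<and> y \<in> Bo})"
  have h1: "real (card S) * (del * real d) \<le> E + real (card S) * K + n * K"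
  proof -
    have "real (card S) * (del * real d) \<le> (\<Sum>x\<in>S. real (card (rem x)))"
    proof (rule sum_bounded_below)
      fix x assume "x \<in> S"
      then show "del * real d \<le> real (card (rem x))" by (simp add: S_def Bp_def)
    qed
    also have "\<dots> \<le> (\<Sum>x\<in>S. real (card (c1 x)) + real (card (c2 x)) + real (card (c3 x)))"
      by (rule sum_mono) (rule cardrem)
    also have "\<dots> = (\<Sum>x\<in>S. real (card (c1 x))) + (\<Sum>x\<in>S. real (card (c2 x))) + (\<Sum>x\<in>S. real (card (c3 x)))"
      by (simp add: sum.distrib)
    also have "(\<Sum>x\<in>S. real (card (c2 x))) \<le> (\<Sum>x\<in>S. K)" by (rule sum_mono) (rule c2K)
    also have "(\<Sum>x\<in>S. K) = real (card S) * K" by simp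
    finally show ?thesis using sum1 sum3 unfolding E_def by linarith
  qed
  have h2: "E \<le> real d * real (card S) * real (card Bo) / n + expansion adj * sqrt (real (card S) * real (card Bo))"
    unfolding E_def n_def by (rule expander_mixing[OF reg n2])
  have sn: "real (card S) \<le> n" unfolding n_def by (simp add: card_mono)
  have hS: "real (card S) \<le> eps * del * n / 2"
    by (rule arith1[OF h1 h2 _ hBo _ sn n0 _ del0 del1 eps0 eps1 lam0 lam1 K]) (simp_all add: d0)
  have "Bp \<subseteq> Bs \<union> S" by (auto simp: S_def)
  then have "card Bp \<le> card (Bs \<union> S)" by (rule card_mono[rotated]) simp
  also have "\<dots> \<le> card Bs + card S" by (rule card_Un_le)
  finally have "real (card Bp) \<le> real (card Bs) + real (card S)" by linarith
  also have "\<dots> \<le> (1 - eps) * del * n + eps * del * n / 2" using hBs hS by linarith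
  also have "\<dots> = (1 - eps/2) * del * n" by (simp add: algebra_simps)
  finally show ?thesis unfolding Bp_def rem_def n_def .
qed


theorem lemma3p6:
  fixes r :: nat and C0 :: "(bit ^ 'd) set" and adj :: "'n::finite \<Rightarrow> 'n \<Rightarrow> bool"
    and Gam :: "bool \<times> 'n \<Rightarrow> 'd \<Rightarrow> 'n"
    and delta delta_r lam eps :: real and z :: "'n \<times> 'n \<Rightarrow> bit option"
    and gs :: "bool \<times> 'n \<Rightarrow> (bit ^ 'd) list" and b :: "bool \<times> 'n \<Rightarrow> bit ^ 'd"
    and E' :: "('n \<times> 'n) set"
  assumes r: "r \<ge> 1"
    and code: "linear_code C0"
    and dimr: "\<exists>V. V \<subseteq> C0 \<and> vec.subspace V \<and> vec.dim V = r"
    and delta: "delta = rel_distance C0"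
    and deltar: "delta_r = gen_rel_distance C0 r"
    and n2: "CARD('n) \<ge> 2"
    and graph: "regular_graph adj CARD('d)"
    and lam_def: "lam = expansion adj"
    and order: "\<forall>v. bij_betw (Gam v) UNIV {u. adj (snd v) u}"
    and eps: "eps > 0"
    and lam_eps: "lam / real CARD('d) \<le> eps^2 * delta^2 / 2^(r+4)"
    and erasures: "real (card {e \<in> dc_edges adj. z e = None})
                     \<le> (1 - eps) * delta * delta_r * real CARD('d) * real CARD('n)"
    and param: "\<forall>v. v \<notin> bad_set adj (delta_r * real CARD('d)) z \<longrightarrow>
                  is_param (list_dec C0 (local_word z Gam v)) (b v) (gs v)"
    and fhe: "find_heavy_edges_output adj (eps^2 * delta^2 / 2^(r+3) * real CARD('d))
                (bad_set adj (delta_r * real CARD('d)) z) gs Gam E'"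
  defines "B' \<equiv> {v :: bool \<times> 'n. real (card {u. adj (snd v) u \<and> dc_edge v u \<notin> E'})
                   > delta * real CARD('d)}"
  shows "real (card {x. (False, x) \<in> B'}) \<le> (1 - eps/2) * delta * real CARD('n)
       \<and> real (card {x. (True, x) \<in> B'}) \<le> (1 - eps/2) * delta * real CARD('n)
       \<and> real (card {(x, y) \<in> dc_edges adj. (False, x) \<in> B' \<and> (True, y) \<in> B'})
           \<le> (1 - eps/4) * (delta - lam / real CARD('d)) * delta * real CARD('n) * real CARD('d)"
proof -
  let ?n = "CARD('n)"
  let ?d = "CARD('d)"
  define tr where "tr = delta_r * real ?d"
  define thr where "thr = eps^2 * delta^2 / 2^(r+3) * real ?d"
  define B where "B = bad_set adj tr z"
  define E0 where "E0 = dc_edges adj - (\<Union>v\<in>B. incident adj v)"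
  have sym: "\<And>u v. adj u v \<Longrightarrow> adj v u" using graph by (auto simp: regular_graph_def)
  have d0: "?d > 0" by simp
  have n0: "real ?n > 0" by simp
  obtain V where V: "V \<subseteq> C0" "vec.subspace V" "vec.dim V = r" using dimr by blast
  have "\<not> V \<subseteq> {0}"
  proof
    assume "V \<subseteq> {0}"
    then have "vec.dim V = 0" by (rule dim_zero_sub)
    with V(3) r show False by simp
  qed
  then obtain c where c: "c \<in> V" "c \<noteq> 0" by blast
  have cC: "c \<in> C0" using c V(1) by blast
  have dl: "0 < delta" "delta \<le> 1" using rel_distance_bounds[OF cC c(2)] delta by simp_all
  have drpos: "delta_r > 0" using gen_pos[OF dimr r] deltar by simp
  have tr0: "tr > 0" using drpos d0 by (simp add: tr_def)
  have eps1: "eps \<le> 1"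
  proof (rule ccontr)
    assume "\<not> eps \<le> 1"
    then have "1 - eps < 0" by simp
    moreover have "0 < delta * delta_r * real ?d * real ?n" using dl drpos d0 n0 by simp
    ultimately have "(1 - eps) * (delta * delta_r * real ?d * real ?n) < 0" by (rule mult_neg_pos)
    then have "(1 - eps) * delta * delta_r * real ?d * real ?n < 0" by (simp add: mult.assoc)
    with erasures show False by simp
  qed
  have eras': "real (card {e \<in> dc_edges adj. z e = None}) \<le> (1 - eps) * delta * tr * real ?n"
    using erasures by (simp add: tr_def mult.assoc)
  have len: "length (gs w) \<le> r" if wB: "w \<notin> B" for w
  proof -
    have pw: "is_param (list_dec C0 (local_word z Gam w)) (b w) (gs w)"
      using spec[OF param, of w] wB by (simp add: B_def tr_def)
    have bij: "bij_betw (Gam w) UNIV {u. adj (snd w) u}" using order by blast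
    have eqI: "{i. local_word z Gam w $ i = None} = {i. z (dc_edge w (Gam w i)) = None}"
      by (simp add: local_word_def)
    have img: "Gam w ` {i. z (dc_edge w (Gam w i)) = None} = {u. adj (snd w) u \<and> z (dc_edge w u) = None}"
    proof
      show "Gam w ` {i. z (dc_edge w (Gam w i)) = None} \<subseteq> {u. adj (snd w) u \<and> z (dc_edge w u) = None}"
        using bij by (auto simp: bij_betw_def)
      show "{u. adj (snd w) u \<and> z (dc_edge w u) = None} \<subseteq> Gam w ` {i. z (dc_edge w (Gam w i)) = None}"
      proof
        fix u assume u: "u \<in> {u. adj (snd w) u \<and> z (dc_edge w u) = None}"
        then have "u \<in> range (Gam w)" using bij by (auto simp: bij_betw_def)
        then obtain i where "u = Gam w i" by blast
        then show "u \<in> Gam w ` {i. z (dc_edge w (Gam w i)) = None}" using u by blast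
      qed
    qed
    have injG: "inj (Gam w)" using bij by (simp add: bij_betw_def)
    have "card {i. local_word z Gam w $ i = None} = card {u. adj (snd w) u \<and> z (dc_edge w u) = None}"
      unfolding eqI img[symmetric] by (rule card_image[symmetric]) (rule inj_on_subset[OF injG], simp)
    moreover have "\<not> tr < real (card {u. adj (snd w) u \<and> z (dc_edge w u) = None})"
      using wB by (simp add: B_def bad_set_def)
    ultimately have "real (card {i. local_word z Gam w $ i = None}) \<le> gen_rel_distance C0 r * real ?d"
      by (simp add: tr_def deltar)
    then show ?thesis by (rule gs_len[OF code pw])
  qed
  have thr0: "thr \<ge> 0" by (simp add: thr_def)
  have run: "(fhe_step adj thr gs Gam)\<^sup>*\<^sup>* E0 E'"
    using fhe by (simp add: find_heavy_edges_output_def E0_def B_def tr_def thr_def)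
  obtain D where cover: "E0 - E' \<subseteq> (\<Union>w. D w)" and Dinc: "\<forall>w. D w \<subseteq> incident adj w"
    and Dcard: "\<forall>w. real (card (D w)) \<le> 2 ^ r * thr"
    using removal_bound[OF order run E0_def thr0 len] by blast
  have K: "2 ^ r * thr = eps^2 * delta^2 * real ?d / 8"
  proof -
    have "(2::real) ^ (r + 3) = 2 ^ r * 8" by (simp add: power_add)
    then show ?thesis by (simp add: thr_def)
  qed
  have lam0: "0 \<le> expansion adj" by (simp add: expansion_def)
  have lam1: "expansion adj \<le> real ?d * eps^2 * delta^2 / 32"
  proof -
    have "(2::real) ^ (r + 4) = 2 ^ r * 16" by (simp add: power_add)
    moreover have "(2::real) ^ r \<ge> 2" using r by (metis power_one_right power_increasing one_le_numeral)
    ultimately have p: "(2::real) ^ (r + 4) \<ge> 32" by simp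
    have "eps^2 * delta^2 / 2^(r+4) \<le> eps^2 * delta^2 / 32"
      using p by (intro divide_left_mono) auto
    then have "lam / real ?d \<le> eps^2 * delta^2 / 32" using lam_eps by linarith
    then have "lam \<le> real ?d * (eps^2 * delta^2 / 32)" using d0 by (simp add: divide_le_eq mult.commute)
    then show ?thesis using lam_def by simp
  qed
  have sideL: "real (card {x. delta * real ?d < real (card {u. adj x u \<and> dc_edge (False,x) u \<notin> E'})})
           \<le> (1 - eps/2) * delta * real ?n"
    by (rule side_bound[where adj=adj, OF sym graph n2 E0_def cover spec[OF Dinc] spec[OF Dcard] B_def tr0 eras'
          d0 dl(1) dl(2) eps eps1 K lam0 lam1])
  have sideR: "real (card {x. delta * real ?d < real (card {u. adj x u \<and> dc_edge (True,x) u \<notin> E'})})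
           \<le> (1 - eps/2) * delta * real ?n"
    by (rule side_bound[where adj=adj, OF sym graph n2 E0_def cover spec[OF Dinc] spec[OF Dcard] B_def tr0 eras'
          d0 dl(1) dl(2) eps eps1 K lam0 lam1])
  define SL where "SL = {x. (False, x) \<in> B'}"
  define SR where "SR = {x. (True, x) \<in> B'}"
  have SLe: "SL = {x. delta * real ?d < real (card {u. adj x u \<and> dc_edge (False,x) u \<notin> E'})}"
    by (simp add: SL_def B'_def)
  have SRe: "SR = {x. delta * real ?d < real (card {u. adj x u \<and> dc_edge (True,x) u \<notin> E'})}"
    by (simp add: SR_def B'_def)
  have hL: "real (card SL) \<le> (1 - eps/2) * delta * real ?n" using sideL SLe by simp
  have hR: "real (card SR) \<le> (1 - eps/2) * delta * real ?n" using sideR SRe by simp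
  have eqE: "{(x, y) \<in> dc_edges adj. (False, x) \<in> B' \<and> (True, y) \<in> B'} = {(x,y). adj x y \<and> x \<in> SL \<and> y \<in> SR}"
    by (auto simp: dc_edges_def SL_def SR_def)
  have mix: "real (card {(x,y). adj x y \<and> x \<in> SL \<and> y \<in> SR})
    \<le> real ?d * real (card SL) * real (card SR) / real ?n + expansion adj * sqrt (real (card SL) * real (card SR))"
    by (rule expander_mixing[OF graph n2])
  have part2: "real (card {(x, y) \<in> dc_edges adj. (False, x) \<in> B' \<and> (True, y) \<in> B'})
      \<le> (1 - eps/4) * (delta - expansion adj / real ?d) * delta * real ?n * real ?d"
    unfolding eqE
    by (rule arith2[OF mix _ _ hL hR n0 _ dl(1) dl(2) eps eps1 lam0 lam1]) (simp_all add: d0)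
  show ?thesis using hL hR part2 lam_def unfolding SL_def SR_def by simp
qed


end
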